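(* Let $n \geq 1$ be an integer, let $\lambda_0 \geq 0 > \lambda_1 \geq \cdots \geq \lambda_n$ be real numbers and let $z_1, z_2, z_3$ be complex numbers with $z_j = a_j + b_j i$, $a_j \in \mathbb{R}$, $b_j > 0$ for $j = 1, 2, 3$. If $\lambda_0 + \sum_{j=1}^n \lambda_j - 2\sum_{j=1}^3 |z_j| \geq 0$, then there is an $(n+7) \times (n+7)$ normal centrosymmetric nonnegative matrix with eigenvalues $\lambda_0, \lambda_1, \ldots, \lambda_n, z_1, z_2, z_3, \overline{z}_1, \overline{z}_2, \overline{z}_3$.
   Context: $J$ denotes the reverse identity matrix of the appropriate size (ones on the anti-diagonal, zeros elsewhere). A square matrix $Q$ is centrosymmetric if $JQJ = Q$, nonnegative if all entries are nonnegative, and normal if $QQ^* = Q^*Q$. *)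

theory Defs
  imports "Jordan_Normal_Form.Schur_Decomposition"
begin

definition exchange_mat :: "nat \<Rightarrow> 'a :: {zero,one} mat" where
  "exchange_mat n = mat n n (\<lambda>(i, j). if i + j + 1 = n then 1 else 0)"

definition centrosymmetric :: "'a :: comm_ring_1 mat \<Rightarrow> bool" where
  "centrosymmetric Q \<longleftrightarrow> square_mat Q \<and>
     exchange_mat (dim_row Q) * Q * exchange_mat (dim_row Q) = Q"

definition nonneg_mat :: "real mat \<Rightarrow> bool" where
  "nonneg_mat Q \<longleftrightarrow> (\<forall>i < dim_row Q. \<forall>j < dim_col Q. Q $$ (i, j) \<ge> 0)"

definition normal_mat :: "'a :: conjugatable_field mat \<Rightarrow> bool" where
  "normal_mat Q \<longleftrightarrow> square_mat Q \<and> Q * mat_adjoint Q = mat_adjoint Q * Q"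

definition has_eigenvalues :: "real mat \<Rightarrow> complex list \<Rightarrow> bool" where
  "has_eigenvalues Q es \<longleftrightarrow>
     char_poly (map_mat complex_of_real Q) = (\<Prod>a\<leftarrow>es. [:- a, 1:])"

end

theory Submission
  imports Defs
begin


definition outer :: "'a::comm_ring_1 vec \<Rightarrow> 'a vec \<Rightarrow> 'a mat" where
  "outer a b = mat (dim_vec a) (dim_vec b) (\<lambda>(i,j). a$i * b$j)"

lemma outer_carrier[simp]: "outer a b \<in> carrier_mat (dim_vec a) (dim_vec b)"
  and outer_dims[simp]: "dim_row (outer a b) = dim_vec a" "dim_col (outer a b) = dim_vec b"
  by (auto simp: outer_def)

lemma outer_index[simp]: "i < dim_vec a \<Longrightarrow> j < dim_vec b \<Longrightarrow> outer a b $$ (i,j) = a$i * b$j"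
  by (simp add: outer_def)

lemma outer_mult_vec: assumes "dim_vec c = dim_vec b"
  shows "outer a b *\<^sub>v c = (b \<bullet> c) \<cdot>\<^sub>v a"
  using assms by (intro eq_vecI, auto simp: scalar_prod_def sum_distrib_left ac_simps intro!: sum.cong)

lemma mult_outer: assumes "dim_col A = dim_vec a"
  shows "A * outer a b = outer (A *\<^sub>v a) b"
  using assms by (intro eq_matI, auto simp: scalar_prod_def sum_distrib_left ac_simps intro!: sum.cong)

lemma outer_mult: assumes "dim_row A = dim_vec b"
  shows "outer a b * A = outer a (transpose_mat A *\<^sub>v b)"
  using assms by (intro eq_matI, auto simp: scalar_prod_def sum_distrib_left ac_simps intro!: sum.cong)

lemma transpose_outer: "transpose_mat (outer a b) = outer b a"
  by (intro eq_matI, auto simp: mult.commute)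

lemma char_poly_col_single: fixes A :: "'a :: idom mat" 
  assumes 0: "\<And> j. j < n \<Longrightarrow> j \<noteq> i \<Longrightarrow> A $$ (j,i) = 0" 
  and A: "A \<in> carrier_mat n n" 
  and i: "i < n"
shows "char_poly A = [:- (A $$ (i,i)), 1:] * char_poly (mat_delete A i i)" 
proof -
  let ?A = "mat_delete A i i" 
  let ?sum = "[:0, 1:] \<cdot>\<^sub>m 1\<^sub>m n + map_mat (\<lambda>a. [:- a:]) A" 
  define Sum where "Sum = ?sum" 
  let ?f = "\<lambda> j. Sum $$ (j, i) * cofactor Sum j i" 
  have Sum: "Sum \<in> carrier_mat n n" using A unfolding Sum_def by auto
  from A have id: "dim_row A = n" by auto  
  have "char_poly A = (\<Sum>j<n. ?f j)" 
    unfolding char_poly_def[of A] char_poly_matrix_def 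
    using laplace_expansion_column[OF Sum i] unfolding Sum_def using A by simp
  also have "\<dots> = ?f i + sum ?f ({..<n} - {i})" 
    by (rule sum.remove[of _ i], insert i, auto)
  also have "\<dots> = ?f i" 
  proof (subst sum.neutral, intro ballI)
    fix j
    assume "j \<in> {..<n} - {i}" 
    hence j: "j < n" and ji: "j \<noteq> i" by auto
    show "?f j = 0" unfolding Sum_def using ji j i A 0[OF j] by simp
  qed simp
  also have "?f i = [:- (A $$ (i,i)), 1:] * (cofactor Sum i i)" 
    unfolding Sum_def using i A by simp
  also have "cofactor Sum i i = det (mat_delete Sum i i)" 
    unfolding cofactor_def by simp
  also have "\<dots> = char_poly ?A" 
    unfolding char_poly_def char_poly_matrix_def Sum_def
  proof (rule arg_cong[of _ _ det])
    show "mat_delete ?sum i i = [:0, 1:] \<cdot>\<^sub>m 1\<^sub>m (dim_row ?A) + map_mat (\<lambda>a. [:- a:]) ?A"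
      using i A by (auto simp: mat_delete_def)
  qed
  finally show ?thesis .
qed

lemma sim_conj: assumes A: "A \<in> carrier_mat n n" and P: "P \<in> carrier_mat n n" and Q: "Q \<in> carrier_mat n n"
  and PQ: "P * Q = 1\<^sub>m n" and QP: "Q * P = 1\<^sub>m n"
  shows "similar_mat A (Q * A * P)"
proof (rule similar_matI[where n=n and P=P and Q=Q])
  have "P * (Q * A * P) * Q = (P * Q) * A * (P * Q)"
    using A P Q by (simp add: assoc_mult_mat[of _ n n _ n _ n])
  also have "\<dots> = A" using A by (simp add: PQ)
  finally show "A = P * (Q * A * P) * Q" by simp
qed (insert A P Q PQ QP, auto)

lemma brauer: fixes M0 :: "'a::field mat"
  assumes M0: "M0 \<in> carrier_mat N N" and p: "p \<in> carrier_vec N" and y: "y \<in> carrier_vec N"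
    and ev: "M0 *\<^sub>v p = lam \<cdot>\<^sub>v p" and i0: "i0 < N" and pi0: "p $ i0 \<noteq> 0"
  shows "char_poly (M0 + outer p y) * [:-lam,1:] = char_poly M0 * [:-(lam + y \<bullet> p), 1:]"
proof -
  define t where "t = p $ i0"
  have t: "t \<noteq> 0" using pi0 t_def by auto
  define S where "S = mat N N (\<lambda>(i,j). if j = i0 then p$i else if i = j then 1 else (0::'a))"
  define Si where "Si = mat N N (\<lambda>(i,j). if j = i0 then (if i = i0 then 1/t else - p$i/t) else if i = j then 1 else (0::'a))"
  have S: "S \<in> carrier_mat N N" and Si: "Si \<in> carrier_mat N N" unfolding S_def Si_def by auto
  have SSi: "S * Si = 1\<^sub>m N"
  proof (rule eq_matI)
    fix i j assume i: "i < dim_row (1\<^sub>m N :: 'a mat)" and j: "j < dim_col (1\<^sub>m N :: 'a mat)"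
    hence i: "i < N" and j: "j < N" by auto
    have "(S * Si) $$ (i,j) = (\<Sum>k\<in>{0..<N}. S $$ (i,k) * Si $$ (k,j))"
      using i j S Si by (simp add: scalar_prod_def)
    also have "\<dots> = 1\<^sub>m N $$ (i,j)"
    proof (cases "j = i0")
      case False
      have "(\<Sum>k\<in>{0..<N}. S $$ (i,k) * Si $$ (k,j)) = (\<Sum>k\<in>{0..<N}. if k = j then S $$ (i,j) else 0)"
        by (rule sum.cong, insert False j, auto simp: Si_def)
      also have "\<dots> = S $$ (i,j)" using j by simp
      finally show ?thesis using False i j by (simp add: S_def)
    next
      case True
      have "(\<Sum>k\<in>{0..<N}. S $$ (i,k) * Si $$ (k,j)) = (\<Sum>k\<in>{0..<N}. (if k = i0 then p $ i / t else 0) - (if k = i \<and> i \<noteq> i0 then p$i / t else 0))"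
        by (rule sum.cong, insert True i j, auto simp: Si_def S_def)
      also have "\<dots> = p $ i / t - (if i \<noteq> i0 then p$i/t else 0)"
        using i i0 by (simp add: sum_subtractf)
      finally show ?thesis using True i j t by (auto simp: t_def)
    qed
    finally show "(S * Si) $$ (i,j) = 1\<^sub>m N $$ (i,j)" .
  qed (insert S Si, auto)
  have SiS: "Si * S = 1\<^sub>m N"
  proof (rule eq_matI)
    fix i j assume i: "i < dim_row (1\<^sub>m N :: 'a mat)" and j: "j < dim_col (1\<^sub>m N :: 'a mat)"
    hence i: "i < N" and j: "j < N" by auto
    have "(Si * S) $$ (i,j) = (\<Sum>k\<in>{0..<N}. Si $$ (i,k) * S $$ (k,j))"
      using i j S Si by (simp add: scalar_prod_def)
    also have "\<dots> = 1\<^sub>m N $$ (i,j)"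
    proof (cases "j = i0")
      case False
      have "(\<Sum>k\<in>{0..<N}. Si $$ (i,k) * S $$ (k,j)) = (\<Sum>k\<in>{0..<N}. if k = j then Si $$ (i,j) else 0)"
        by (rule sum.cong, insert False j, auto simp: S_def)
      also have "\<dots> = Si $$ (i,j)" using j by simp
      finally show ?thesis using False i j by (simp add: Si_def)
    next
      case True
      show ?thesis
      proof (cases "i = i0")
        case ii: True
        have "(\<Sum>k\<in>{0..<N}. Si $$ (i,k) * S $$ (k,j)) = (\<Sum>k\<in>{0..<N}. if k = i0 then 1 else 0)"
          by (rule sum.cong, insert True ii i j t, auto simp: Si_def S_def t_def)
        thus ?thesis using i0 True ii by simp
      next
        case ii: False
        have "(\<Sum>k\<in>{0..<N}. Si $$ (i,k) * S $$ (k,j)) = (\<Sum>k\<in>{0..<N}. (if k = i then p$i else 0) - (if k = i0 then p $ i else 0))"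
          by (rule sum.cong, insert True ii i j t, auto simp: Si_def S_def t_def)
        also have "\<dots> = 0" using i i0 by (simp add: sum_subtractf)
        finally show ?thesis using True ii i j by simp
      qed
    qed
    finally show "(Si * S) $$ (i,j) = 1\<^sub>m N $$ (i,j)" .
  qed (insert S Si, auto)
  define M where "M = M0 + outer p y"
  have Mc: "M \<in> carrier_mat N N" using M0 p y unfolding M_def by auto
  have colS: "col S i0 = p" using p i0 by (intro eq_vecI, auto simp: S_def)
  have Sip: "Si *\<^sub>v p = unit_vec N i0"
  proof (rule eq_vecI)
    fix i assume "i < dim_vec (unit_vec N i0 :: 'a vec)"
    hence i: "i < N" by auto
    have "(Si *\<^sub>v p) $ i = (\<Sum>k\<in>{0..<N}. Si $$ (i,k) * p $ k)"
      using i Si p by (simp add: scalar_prod_def)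
    also have "\<dots> = unit_vec N i0 $ i"
    proof (cases "i = i0")
      case True
      have "(\<Sum>k\<in>{0..<N}. Si $$ (i,k) * p $ k) = (\<Sum>k\<in>{0..<N}. if k = i0 then 1 else 0)"
        by (rule sum.cong, insert True i t, auto simp: Si_def t_def)
      thus ?thesis using True i0 by simp
    next
      case False
      have "(\<Sum>k\<in>{0..<N}. Si $$ (i,k) * p $ k) = (\<Sum>k\<in>{0..<N}. (if k = i then p$i else 0) - (if k = i0 then p $ i else 0))"
        by (rule sum.cong, insert False i t, auto simp: Si_def t_def)
      also have "\<dots> = 0" using i i0 by (simp add: sum_subtractf)
      finally show ?thesis using False i by (simp add: unit_vec_def)
    qed
    finally show "(Si *\<^sub>v p) $ i = unit_vec N i0 $ i" .
  qed (insert Si, auto)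
  have Mp: "M *\<^sub>v p = (lam + y \<bullet> p) \<cdot>\<^sub>v p"
  proof -
    have "M *\<^sub>v p = M0 *\<^sub>v p + outer p y *\<^sub>v p" unfolding M_def
      by (rule add_mult_distrib_mat_vec[OF M0 _ p], insert p y, auto)
    also have "outer p y *\<^sub>v p = (y \<bullet> p) \<cdot>\<^sub>v p" by (rule outer_mult_vec, insert p y, auto)
    finally show ?thesis unfolding ev by (simp add: add_smult_distrib_vec)
  qed
  define T where "T = Si * M * S"
  define T0 where "T0 = Si * M0 * S"
  have T: "T \<in> carrier_mat N N" and T0: "T0 \<in> carrier_mat N N" unfolding T_def T0_def
    using S Si Mc M0 by auto
  have simT: "similar_mat M T" unfolding T_def by (rule sim_conj[OF Mc S Si SSi SiS])
  have simT0: "similar_mat M0 T0" unfolding T0_def by (rule sim_conj[OF M0 S Si SSi SiS])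
  have colT: "col T i0 = (lam + y \<bullet> p) \<cdot>\<^sub>v unit_vec N i0"
  proof -
    have MS: "M * S \<in> carrier_mat N N" using Mc S by auto
    have c1: "col T i0 = Si *\<^sub>v col (M * S) i0" unfolding T_def
      using assoc_mult_mat[OF Si Mc S] col_mult2[OF Si MS i0] by simp
    have c2: "col (M * S) i0 = M *\<^sub>v col S i0" by (rule col_mult2[OF Mc S i0])
    have "col T i0 = Si *\<^sub>v (M *\<^sub>v col S i0)" unfolding c1 c2 ..
    also have "\<dots> = (lam + y \<bullet> p) \<cdot>\<^sub>v unit_vec N i0" unfolding colS Mp
      using Si p by (simp add: mult_mat_vec Sip)
    finally show ?thesis .
  qed
  have colT0: "col T0 i0 = lam \<cdot>\<^sub>v unit_vec N i0"
  proof -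
    have MS: "M0 * S \<in> carrier_mat N N" using M0 S by auto
    have c1: "col T0 i0 = Si *\<^sub>v col (M0 * S) i0" unfolding T0_def
      using assoc_mult_mat[OF Si M0 S] col_mult2[OF Si MS i0] by simp
    have c2: "col (M0 * S) i0 = M0 *\<^sub>v col S i0" by (rule col_mult2[OF M0 S i0])
    have "col T0 i0 = Si *\<^sub>v (M0 *\<^sub>v col S i0)" unfolding c1 c2 ..
    also have "\<dots> = lam \<cdot>\<^sub>v unit_vec N i0" unfolding colS ev
      using Si p by (simp add: mult_mat_vec Sip)
    finally show ?thesis .
  qed
  have TT0: "T $$ (i,j) = T0 $$ (i,j)" if i: "i < N" "i \<noteq> i0" and j: "j < N" for i j
  proof -
    have O: "outer p y \<in> carrier_mat N N" using p y by auto
    have "Si * (M0 + outer p y) = Si * M0 + Si * outer p y" by (rule mult_add_distrib_mat[OF Si M0 O])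
    hence "T = (Si * M0 + Si * outer p y) * S" unfolding T_def M_def by simp
    also have "\<dots> = T0 + Si * outer p y * S" unfolding T0_def
      by (rule add_mult_distrib_mat, insert Si M0 O S, auto)
    finally have "T = T0 + Si * outer p y * S" .
    also have "Si * outer p y * S = outer (unit_vec N i0) (transpose_mat S *\<^sub>v y)"
      using Si S p y by (simp add: mult_outer outer_mult Sip)
    finally show ?thesis using i j T0 S y by (simp add: unit_vec_def)
  qed
  have del: "mat_delete T i0 i0 = mat_delete T0 i0 i0"
    using T T0 i0 TT0 by (intro eq_matI, auto simp: mat_delete_def insert_index_def)
  have cT: "char_poly T = [:-(lam + y \<bullet> p), 1:] * char_poly (mat_delete T i0 i0)"
  proof -
    have z: "T $$ (j,i0) = 0" if "j < N" "j \<noteq> i0" for j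
    proof -
      have "T $$ (j,i0) = col T i0 $ j" using T that i0 by simp
      thus ?thesis unfolding colT using that by (simp add: unit_vec_def)
    qed
    have "char_poly T = [:- (T $$ (i0,i0)), 1:] * char_poly (mat_delete T i0 i0)"
      by (rule char_poly_col_single[OF z T i0])
    moreover have "T $$ (i0,i0) = lam + y \<bullet> p" using arg_cong[OF colT, of "\<lambda>v. v $ i0"] T i0 by auto
    ultimately show ?thesis by simp
  qed
  have cT0: "char_poly T0 = [:-lam, 1:] * char_poly (mat_delete T i0 i0)"
  proof -
    have z: "T0 $$ (j,i0) = 0" if "j < N" "j \<noteq> i0" for j
    proof -
      have "T0 $$ (j,i0) = col T0 i0 $ j" using T0 that i0 by simp
      thus ?thesis unfolding colT0 using that by (simp add: unit_vec_def)
    qed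
    have "char_poly T0 = [:- (T0 $$ (i0,i0)), 1:] * char_poly (mat_delete T0 i0 i0)"
      by (rule char_poly_col_single[OF z T0 i0])
    moreover have "T0 $$ (i0,i0) = lam" using arg_cong[OF colT0, of "\<lambda>v. v $ i0"] T0 i0 by auto
    ultimately show ?thesis using del by simp
  qed
  show ?thesis unfolding M_def[symmetric] char_poly_similar[OF simT] char_poly_similar[OF simT0] cT cT0
    by (simp only: mult.assoc mult.commute mult.left_commute)
qed

lemma merge_char: fixes M0 :: "'a::field mat"
  assumes M0: "M0 \<in> carrier_mat N N" and p: "p \<in> carrier_vec N" and q: "q \<in> carrier_vec N"
    and evp: "M0 *\<^sub>v p = al \<cdot>\<^sub>v p" and evq: "M0 *\<^sub>v q = be \<cdot>\<^sub>v q"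
    and pq: "p \<bullet> q = 0" and qq: "q \<bullet> q \<noteq> 0"
    and j0: "j0 < N" "q $ j0 \<noteq> 0"
    and K: "(th1 - al) * (th1 - be) = rho^2 * (p \<bullet> p) * (q \<bullet> q)"
    and th2: "th2 = al + be - th1"
    and i0: "i0 < N" "((rho * (q \<bullet> q)) \<cdot>\<^sub>v p + (th1 - al) \<cdot>\<^sub>v q) $ i0 \<noteq> 0"
  shows "char_poly (M0 + rho \<cdot>\<^sub>m (outer p q + outer q p)) * [:-al,1:] * [:-be,1:]
     = char_poly M0 * [:-th1,1:] * [:-th2,1:]"
proof -
  define a where "a = rho * (q \<bullet> q)"
  define s where "s = th1 - al"
  define w where "w = a \<cdot>\<^sub>v p + s \<cdot>\<^sub>v q"
  define c where "c = - s / (q \<bullet> q)"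
  define z where "z = rho \<cdot>\<^sub>v p + c \<cdot>\<^sub>v q"
  define y where "y = (1 / (q \<bullet> q)) \<cdot>\<^sub>v q"
  define M' where "M' = M0 + outer q z"
  define M where "M = M0 + rho \<cdot>\<^sub>m (outer p q + outer q p)"
  have w: "w \<in> carrier_vec N" and z: "z \<in> carrier_vec N" and y: "y \<in> carrier_vec N"
    unfolding w_def z_def y_def using p q by auto
  have qp: "q \<bullet> p = 0" using pq comm_scalar_prod[OF p q] by simp
  have zq: "z \<bullet> q = - s" unfolding z_def c_def
    using p q qq by (simp add: add_scalar_prod_distrib[of _ N] pq)
  have zw: "z \<bullet> w = rho * a * (p \<bullet> p) + c * s * (q \<bullet> q)" unfolding z_def w_def
    using p q by (simp add: add_scalar_prod_distrib[of _ N] scalar_prod_add_distrib[of _ N] pq qp)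
  have zw2: "z \<bullet> w = s * (al - be)"
  proof -
    have "z \<bullet> w = rho^2 * (p \<bullet> p) * (q \<bullet> q) - s * s" unfolding zw a_def c_def
      using qq by (simp add: field_simps power2_eq_square)
    also have "\<dots> = s * (th1 - be) - s * s" unfolding K[symmetric] s_def by simp
    finally show ?thesis unfolding s_def by (simp add: algebra_simps)
  qed
  have yw: "y \<bullet> w = s" unfolding y_def w_def
    using p q qq by (simp add: scalar_prod_add_distrib[of _ N] qp)
  have MM: "M = M' + outer w y"
    unfolding M_def M'_def
  proof (rule eq_matI)
    fix i j assume "i < dim_row (M0 + outer q z + outer w y)" "j < dim_col (M0 + outer q z + outer w y)"
    hence i: "i < N" and j: "j < N" using M0 w y by auto
    show "(M0 + rho \<cdot>\<^sub>m (outer p q + outer q p)) $$ (i, j) = (M0 + outer q z + outer w y) $$ (i, j)"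
      using i j M0 p q w y z qq unfolding w_def y_def z_def a_def c_def
      by (simp add: field_simps)
  qed (insert M0 p q w y z, auto)
  have M'c: "M' \<in> carrier_mat N N" unfolding M'_def using M0 q z by auto
  have evw: "M' *\<^sub>v w = al \<cdot>\<^sub>v w"
  proof -
    have "M' *\<^sub>v w = M0 *\<^sub>v w + outer q z *\<^sub>v w" unfolding M'_def
      by (rule add_mult_distrib_mat_vec[OF M0 _ w], insert q z, auto)
    also have "outer q z *\<^sub>v w = (z \<bullet> w) \<cdot>\<^sub>v q" by (rule outer_mult_vec, insert w z, auto)
    also have "M0 *\<^sub>v w = a \<cdot>\<^sub>v (M0 *\<^sub>v p) + s \<cdot>\<^sub>v (M0 *\<^sub>v q)" unfolding w_def
      using M0 p q by (simp add: mult_add_distrib_mat_vec[OF M0] mult_mat_vec)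
    finally show ?thesis unfolding evp evq zw2 unfolding w_def
      using p q by (intro eq_vecI, auto simp: algebra_simps s_def)
  qed
  have b1: "char_poly M' * [:-be,1:] = char_poly M0 * [:-(be + z \<bullet> q), 1:]"
    unfolding M'_def by (rule brauer[OF M0 q z evq j0])
  have w0: "w $ i0 \<noteq> 0" using i0 unfolding w_def a_def s_def by simp
  have b2: "char_poly M * [:-al,1:] = char_poly M' * [:-(al + y \<bullet> w), 1:]"
    unfolding MM by (rule brauer[OF M'c w y evw i0(1) w0])
  have e1: "be + z \<bullet> q = th2" unfolding zq s_def th2 by simp
  have e2: "al + y \<bullet> w = th1" unfolding yw s_def by simp
  have "char_poly M * [:-al,1:] * [:-be,1:] = char_poly M' * [:-be,1:] * [:-th1,1:]"
    unfolding b2 e2 by (simp only: mult.assoc mult.commute mult.left_commute)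
  also have "\<dots> = char_poly M0 * [:-th1,1:] * [:-th2,1:]" unfolding b1 e1
    by (simp only: mult.assoc mult.commute mult.left_commute)
  finally show ?thesis unfolding M_def .
qed

lemma merge_mult_vec_index: fixes M0 :: "'a::comm_ring_1 mat"
  assumes M0: "M0 \<in> carrier_mat N N" and p: "p \<in> carrier_vec N" and q: "q \<in> carrier_vec N"
    and v: "v \<in> carrier_vec N" and i: "i < N"
  shows "((M0 + rho \<cdot>\<^sub>m (outer p q + outer q p)) *\<^sub>v v) $ i
     = (M0 *\<^sub>v v) $ i + rho * (p $ i * (q \<bullet> v) + q $ i * (p \<bullet> v))"
proof -
  have "((M0 + rho \<cdot>\<^sub>m (outer p q + outer q p)) *\<^sub>v v) $ i
      = (\<Sum>k\<in>{0..<N}. M0 $$ (i,k) * v $ k + rho * (p $ i * (q $ k * v $ k) + q $ i * (p $ k * v $ k)))"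
    using M0 p q v i by (auto simp: scalar_prod_def algebra_simps intro!: sum.cong)
  also have "\<dots> = (M0 *\<^sub>v v) $ i + rho * (p $ i * (q \<bullet> v) + q $ i * (p \<bullet> v))"
    using M0 p q v i by (simp add: scalar_prod_def sum.distrib sum_distrib_left algebra_simps)
  finally show ?thesis .
qed

lemma merge_eig: fixes M0 :: "'a::field mat"
  assumes M0: "M0 \<in> carrier_mat N N" and p: "p \<in> carrier_vec N" and q: "q \<in> carrier_vec N"
    and evp: "M0 *\<^sub>v p = al \<cdot>\<^sub>v p" and evq: "M0 *\<^sub>v q = be \<cdot>\<^sub>v q"
    and pq: "p \<bullet> q = 0"
    and K: "(th1 - al) * (th1 - be) = rho^2 * (p \<bullet> p) * (q \<bullet> q)"
  shows "(M0 + rho \<cdot>\<^sub>m (outer p q + outer q p)) *\<^sub>v ((rho * (q \<bullet> q)) \<cdot>\<^sub>v p + (th1 - al) \<cdot>\<^sub>v q)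
     = th1 \<cdot>\<^sub>v ((rho * (q \<bullet> q)) \<cdot>\<^sub>v p + (th1 - al) \<cdot>\<^sub>v q)"
proof -
  have qp: "q \<bullet> p = 0" using pq comm_scalar_prod[OF p q] by simp
  define a where "a = rho * (q \<bullet> q)"
  define s where "s = th1 - al"
  define w where "w = a \<cdot>\<^sub>v p + s \<cdot>\<^sub>v q"
  have w: "w \<in> carrier_vec N" unfolding w_def using p q by auto
  have M0w: "M0 *\<^sub>v w = a \<cdot>\<^sub>v (al \<cdot>\<^sub>v p) + s \<cdot>\<^sub>v (be \<cdot>\<^sub>v q)" unfolding w_def
    using M0 p q by (simp add: mult_add_distrib_mat_vec[OF M0] mult_mat_vec evp evq)
  have qw: "q \<bullet> w = s * (q \<bullet> q)" unfolding w_def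
    using p q by (simp add: scalar_prod_add_distrib[of _ N] qp)
  have pw: "p \<bullet> w = a * (p \<bullet> p)" unfolding w_def
    using p q by (simp add: scalar_prod_add_distrib[of _ N] pq)
  have K': "s * (th1 - be) = rho^2 * (p \<bullet> p) * (q \<bullet> q)" using K unfolding s_def .
  show ?thesis unfolding a_def[symmetric] s_def[symmetric] w_def[symmetric]
  proof (rule eq_vecI)
    fix i assume "i < dim_vec (th1 \<cdot>\<^sub>v w)"
    hence i: "i < N" using w by auto
    have "((M0 + rho \<cdot>\<^sub>m (outer p q + outer q p)) *\<^sub>v w) $ i
      = (M0 *\<^sub>v w) $ i + rho * (p $ i * (q \<bullet> w) + q $ i * (p \<bullet> w))"
      by (rule merge_mult_vec_index[OF M0 p q w i])
    also have "\<dots> = a * al * p $ i + s * be * q $ i + rho * (p $ i * (s * (q \<bullet> q)) + q $ i * (a * (p \<bullet> p)))"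
      unfolding M0w qw pw using i p q by simp
    also have "\<dots> = th1 * (a * p $ i + s * q $ i)"
    proof -
      have r: "rho * a * (p \<bullet> p) = s * (th1 - be)" unfolding K' a_def by (simp add: power2_eq_square)
      have "a * al * p $ i + s * be * q $ i + rho * (p $ i * (s * (q \<bullet> q)) + q $ i * (a * (p \<bullet> p)))
        = a * (al + s) * p $ i + (s * be + rho * a * (p \<bullet> p)) * q $ i"
        unfolding a_def by (simp add: algebra_simps)
      also have "\<dots> = a * (al + s) * p $ i + (s * be + s * (th1 - be)) * q $ i" unfolding r ..
      finally show ?thesis unfolding s_def by (simp add: algebra_simps)
    qed
    also have "\<dots> = (th1 \<cdot>\<^sub>v w) $ i" unfolding w_def using i p q by simp
    finally show "((M0 + rho \<cdot>\<^sub>m (outer p q + outer q p)) *\<^sub>v w) $ i = (th1 \<cdot>\<^sub>v w) $ i" .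
  qed (insert M0 w p q, auto)
qed

lemma sum_expand4: fixes x y p q :: "nat \<Rightarrow> 'a::comm_ring_1"
  shows "(\<Sum>k\<in>K. (x k + rho * (a * q k + b * p k)) * (y k + rho * (c * q k + d * p k)))
  = (\<Sum>k\<in>K. x k * y k) + rho * (c * (\<Sum>k\<in>K. x k * q k) + d * (\<Sum>k\<in>K. x k * p k)
      + a * (\<Sum>k\<in>K. q k * y k) + b * (\<Sum>k\<in>K. p k * y k))
    + rho * rho * (a * c * (\<Sum>k\<in>K. q k * q k) + a * d * (\<Sum>k\<in>K. q k * p k)
      + b * c * (\<Sum>k\<in>K. p k * q k) + b * d * (\<Sum>k\<in>K. p k * p k))"
  by (simp add: sum.distrib sum_distrib_left algebra_simps)

lemma normal_merge: fixes M0 :: "'a::comm_ring_1 mat"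
  assumes M0: "M0 \<in> carrier_mat N N" and p: "p \<in> carrier_vec N" and q: "q \<in> carrier_vec N"
    and evp: "M0 *\<^sub>v p = al \<cdot>\<^sub>v p" and evq: "M0 *\<^sub>v q = be \<cdot>\<^sub>v q"
    and evp': "transpose_mat M0 *\<^sub>v p = al \<cdot>\<^sub>v p" and evq': "transpose_mat M0 *\<^sub>v q = be \<cdot>\<^sub>v q"
    and nor: "M0 * transpose_mat M0 = transpose_mat M0 * M0"
  shows "(M0 + rho \<cdot>\<^sub>m (outer p q + outer q p)) * transpose_mat (M0 + rho \<cdot>\<^sub>m (outer p q + outer q p))
    = transpose_mat (M0 + rho \<cdot>\<^sub>m (outer p q + outer q p)) * (M0 + rho \<cdot>\<^sub>m (outer p q + outer q p))"
    (is "?M * ?MT = ?MT * ?M")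
proof (rule eq_matI)
  fix i j assume "i < dim_row (?MT * ?M)" "j < dim_col (?MT * ?M)"
  hence i: "i < N" and j: "j < N" using M0 p q by auto
  have r1: "(\<Sum>k\<in>{0..<N}. M0 $$ (i,k) * v $ k) = (M0 *\<^sub>v v) $ i" if "v \<in> carrier_vec N" "i < N" for v i
    using M0 that by (simp add: scalar_prod_def)
  have r2: "(\<Sum>k\<in>{0..<N}. M0 $$ (k,i) * v $ k) = (transpose_mat M0 *\<^sub>v v) $ i" if "v \<in> carrier_vec N" "i < N" for v i
    using M0 that by (simp add: scalar_prod_def)
  have n: "(M0 * transpose_mat M0) $$ (i,j) = (transpose_mat M0 * M0) $$ (i,j)" using nor by simp
  have n1: "(M0 * transpose_mat M0) $$ (i,j) = (\<Sum>k\<in>{0..<N}. M0 $$ (i,k) * M0 $$ (j,k))"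
    using M0 i j by (simp add: scalar_prod_def)
  have n2: "(transpose_mat M0 * M0) $$ (i,j) = (\<Sum>k\<in>{0..<N}. M0 $$ (k,i) * M0 $$ (k,j))"
    using M0 i j by (simp add: scalar_prod_def)
  have "(?M * ?MT) $$ (i,j) = (\<Sum>k\<in>{0..<N}. (M0 $$ (i,k) + rho * (p $ i * q $ k + q $ i * p $ k))
     * (M0 $$ (j,k) + rho * (p $ j * q $ k + q $ j * p $ k)))"
    using M0 p q i j by (simp add: scalar_prod_def)
  also have "\<dots> = (\<Sum>k\<in>{0..<N}. M0 $$ (i,k) * M0 $$ (j,k)) + rho * (p $ j * (\<Sum>k\<in>{0..<N}. M0 $$ (i,k) * q $ k) + q $ j * (\<Sum>k\<in>{0..<N}. M0 $$ (i,k) * p $ k)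
      + p $ i * (\<Sum>k\<in>{0..<N}. M0 $$ (j,k) * q $ k) + q $ i * (\<Sum>k\<in>{0..<N}. M0 $$ (j,k) * p $ k))
    + rho * rho * (p $ i * p $ j * (\<Sum>k\<in>{0..<N}. q $ k * q $ k) + p $ i * q $ j * (\<Sum>k\<in>{0..<N}. q $ k * p $ k)
      + q $ i * p $ j * (\<Sum>k\<in>{0..<N}. p $ k * q $ k) + q $ i * q $ j * (\<Sum>k\<in>{0..<N}. p $ k * p $ k))"
    by (subst sum_expand4, simp add: ac_simps)
  also have "\<dots> = (\<Sum>k\<in>{0..<N}. M0 $$ (k,i) * M0 $$ (k,j)) + rho * (p $ j * (\<Sum>k\<in>{0..<N}. M0 $$ (k,i) * q $ k) + q $ j * (\<Sum>k\<in>{0..<N}. M0 $$ (k,i) * p $ k)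
      + p $ i * (\<Sum>k\<in>{0..<N}. M0 $$ (k,j) * q $ k) + q $ i * (\<Sum>k\<in>{0..<N}. M0 $$ (k,j) * p $ k))
    + rho * rho * (p $ i * p $ j * (\<Sum>k\<in>{0..<N}. q $ k * q $ k) + p $ i * q $ j * (\<Sum>k\<in>{0..<N}. q $ k * p $ k)
      + q $ i * p $ j * (\<Sum>k\<in>{0..<N}. p $ k * q $ k) + q $ i * q $ j * (\<Sum>k\<in>{0..<N}. p $ k * p $ k))"
    unfolding r1[OF p i] r1[OF q i] r1[OF p j] r1[OF q j] r2[OF p i] r2[OF q i] r2[OF p j] r2[OF q j]
      evp evq evp' evq' n1[symmetric] n2[symmetric] n by simp
  also have "\<dots> = (\<Sum>k\<in>{0..<N}. (M0 $$ (k,i) + rho * (p $ i * q $ k + q $ i * p $ k))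
     * (M0 $$ (k,j) + rho * (p $ j * q $ k + q $ j * p $ k)))"
    by (subst sum_expand4, simp add: ac_simps)
  also have "\<dots> = (?MT * ?M) $$ (i,j)"
    using M0 p q i j by (simp add: scalar_prod_def ac_simps)
  finally show "(?M * ?MT) $$ (i,j) = (?MT * ?M) $$ (i,j)" .
qed (insert M0 p q, auto)

section \<open>Permutations\<close>

definition permute_mat :: "(nat \<Rightarrow> nat) \<Rightarrow> 'a mat \<Rightarrow> 'a mat" where
  "permute_mat f A = mat (dim_row A) (dim_col A) (\<lambda>(i,j). A $$ (f i, f j))"

definition permute_vec :: "(nat \<Rightarrow> nat) \<Rightarrow> 'a vec \<Rightarrow> 'a vec" where
  "permute_vec f v = vec (dim_vec v) (\<lambda>i. v $ f i)"

lemma permute_mat_carrier[simp]: "permute_mat f A \<in> carrier_mat (dim_row A) (dim_col A)"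
  and permute_mat_dims[simp]: "dim_row (permute_mat f A) = dim_row A" "dim_col (permute_mat f A) = dim_col A"
  by (auto simp: permute_mat_def)

lemma permute_mat_index[simp]: "i < dim_row A \<Longrightarrow> j < dim_col A \<Longrightarrow> permute_mat f A $$ (i,j) = A $$ (f i, f j)"
  by (simp add: permute_mat_def)

lemma permute_vec_dim[simp]: "dim_vec (permute_vec f v) = dim_vec v"
  by (simp add: permute_vec_def)

lemma permute_vec_index[simp]: "i < dim_vec v \<Longrightarrow> permute_vec f v $ i = v $ f i"
  by (simp add: permute_vec_def)

locale perm_n =
  fixes n :: nat and f :: "nat \<Rightarrow> nat"
  assumes bij: "bij_betw f {..<n} {..<n}"
begin

lemma f_lt: "i < n \<Longrightarrow> f i < n" using bij by (auto simp: bij_betw_def)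

lemma f_inj: "i < n \<Longrightarrow> j < n \<Longrightarrow> f i = f j \<longleftrightarrow> i = j"
  using bij by (auto simp: bij_betw_def inj_on_def)

lemma sum_reindex: "(\<Sum>k<n. g (f k)) = (\<Sum>k<n. g k)"
  using sum.reindex_bij_betw[OF bij, of g] by simp

lemma sum_reindex': "(\<Sum>k\<in>{0..<n}. g (f k)) = (\<Sum>k\<in>{0..<n}. g k)"
  using sum_reindex[of g] by (simp add: atLeast0LessThan)

lemma permute_mult: assumes A: "A \<in> carrier_mat n n" and B: "B \<in> carrier_mat n n"
  shows "permute_mat f A * permute_mat f B = permute_mat f (A * B)"
proof (rule eq_matI)
  fix i j assume "i < dim_row (permute_mat f (A * B))" "j < dim_col (permute_mat f (A * B))"
  hence i: "i < n" and j: "j < n" using A B by auto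
  have "(permute_mat f A * permute_mat f B) $$ (i,j) = (\<Sum>k\<in>{0..<n}. A $$ (f i, f k) * B $$ (f k, f j))"
    using A B i j by (auto simp: scalar_prod_def f_lt intro!: sum.cong)
  also have "\<dots> = (\<Sum>k\<in>{0..<n}. A $$ (f i, k) * B $$ (k, f j))"
    by (rule sum_reindex'[of "\<lambda>k. A $$ (f i, k) * B $$ (k, f j)"])
  also have "\<dots> = permute_mat f (A * B) $$ (i,j)"
    using A B i j by (auto simp: scalar_prod_def f_lt intro!: sum.cong)
  finally show "(permute_mat f A * permute_mat f B) $$ (i,j) = permute_mat f (A * B) $$ (i,j)" .
qed (insert A B, auto)

lemma permute_mult_vec: assumes A: "A \<in> carrier_mat n n" and v: "v \<in> carrier_vec n"
  shows "permute_mat f A *\<^sub>v permute_vec f v = permute_vec f (A *\<^sub>v v)"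
proof (rule eq_vecI)
  fix i assume "i < dim_vec (permute_vec f (A *\<^sub>v v))"
  hence i: "i < n" using A by auto
  have "(permute_mat f A *\<^sub>v permute_vec f v) $ i = (\<Sum>k\<in>{0..<n}. A $$ (f i, f k) * v $ (f k))"
    using A v i by (auto simp: scalar_prod_def f_lt intro!: sum.cong)
  also have "\<dots> = (\<Sum>k\<in>{0..<n}. A $$ (f i, k) * v $ k)"
    by (rule sum_reindex'[of "\<lambda>k. A $$ (f i, k) * v $ k"])
  also have "\<dots> = permute_vec f (A *\<^sub>v v) $ i"
    using A v i by (auto simp: scalar_prod_def f_lt intro!: sum.cong)
  finally show "(permute_mat f A *\<^sub>v permute_vec f v) $ i = permute_vec f (A *\<^sub>v v) $ i" .
qed (insert A v, auto)

lemma permute_transpose: "A \<in> carrier_mat n n \<Longrightarrow> transpose_mat (permute_mat f A) = permute_mat f (transpose_mat A)"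
  by (intro eq_matI, auto simp: f_lt)

lemma permute_similar: assumes A: "A \<in> carrier_mat n n"
  shows "similar_mat A (permute_mat f A)"
proof -
  define P where "P = mat n n (\<lambda>(i,j). if i = f j then 1 else (0::'a))"
  have P: "P \<in> carrier_mat n n" and PT: "transpose_mat P \<in> carrier_mat n n" unfolding P_def by auto
  have Pij: "P $$ (i,j) = (if i = f j then 1 else 0)" if "i < n" "j < n" for i j
    using that unfolding P_def by simp
  have 1: "P * transpose_mat P = 1\<^sub>m n"
  proof (rule eq_matI)
    fix i j assume "i < dim_row (1\<^sub>m n :: 'a mat)" "j < dim_col (1\<^sub>m n :: 'a mat)"
    hence i: "i < n" and j: "j < n" by auto
    obtain k where k: "k < n" "f k = i" using bij i by (metis bij_betw_iff_bijections lessThan_iff)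
    have "(P * transpose_mat P) $$ (i,j) = (\<Sum>l\<in>{0..<n}. P $$ (i,l) * P $$ (j,l))"
      using i j P by (simp add: scalar_prod_def)
    also have "\<dots> = (\<Sum>l\<in>{0..<n}. if l = k then (if i = j then 1 else 0) else 0)"
    proof (rule sum.cong[OF refl])
      fix l assume "l \<in> {0..<n}"
      hence l: "l < n" by auto
      show "P $$ (i,l) * P $$ (j,l) = (if l = k then (if i = j then 1 else 0) else 0)"
        unfolding Pij[OF i l] Pij[OF j l] using f_inj[OF l k(1)] k by auto
    qed
    also have "\<dots> = 1\<^sub>m n $$ (i,j)" using k i j by simp
    finally show "(P * transpose_mat P) $$ (i,j) = 1\<^sub>m n $$ (i,j)" .
  qed (insert P, auto)
  have 2: "transpose_mat P * P = 1\<^sub>m n"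
  proof (rule eq_matI)
    fix i j assume "i < dim_row (1\<^sub>m n :: 'a mat)" "j < dim_col (1\<^sub>m n :: 'a mat)"
    hence i: "i < n" and j: "j < n" by auto
    have "(transpose_mat P * P) $$ (i,j) = (\<Sum>l\<in>{0..<n}. P $$ (l,i) * P $$ (l,j))"
      using i j P by (simp add: scalar_prod_def)
    also have "\<dots> = (\<Sum>l\<in>{0..<n}. if l = f i then (if i = j then 1 else 0) else 0)"
    proof (rule sum.cong[OF refl])
      fix l assume "l \<in> {0..<n}"
      hence l: "l < n" by auto
      show "P $$ (l,i) * P $$ (l,j) = (if l = f i then (if i = j then 1 else 0) else 0)"
        unfolding Pij[OF l i] Pij[OF l j] using f_inj[OF i j] by auto
    qed
    also have "\<dots> = 1\<^sub>m n $$ (i,j)" using i j f_lt[OF i] by simp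
    finally show "(transpose_mat P * P) $$ (i,j) = 1\<^sub>m n $$ (i,j)" .
  qed (insert P, auto)
  have AP: "(A * P) $$ (k, j) = A $$ (k, f j)" if k: "k < n" and j: "j < n" for k j
  proof -
    have "(A * P) $$ (k, j) = (\<Sum>l\<in>{0..<n}. A $$ (k,l) * P $$ (l,j))"
      using A P k j by (simp add: scalar_prod_def)
    also have "\<dots> = (\<Sum>l\<in>{0..<n}. if l = f j then A $$ (k, f j) else 0)"
      by (rule sum.cong[OF refl], insert j, auto simp: Pij)
    finally show ?thesis using f_lt[OF j] by simp
  qed
  have 3: "transpose_mat P * A * P = permute_mat f A"
  proof (rule eq_matI)
    fix i j assume "i < dim_row (permute_mat f A)" "j < dim_col (permute_mat f A)"
    hence i: "i < n" and j: "j < n" using A by auto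
    have "(transpose_mat P * A * P) $$ (i,j) = (transpose_mat P * (A * P)) $$ (i,j)"
      using A P by (simp add: assoc_mult_mat[of _ n n _ n _ n])
    also have "\<dots> = (\<Sum>l\<in>{0..<n}. P $$ (l,i) * (A * P) $$ (l,j))"
      using A P i j by (simp add: scalar_prod_def)
    also have "\<dots> = (\<Sum>l\<in>{0..<n}. if l = f i then A $$ (f i, f j) else 0)"
      by (rule sum.cong[OF refl], insert i j, auto simp: Pij AP)
    also have "\<dots> = permute_mat f A $$ (i,j)" using i j A f_lt[OF i] by simp
    finally show "(transpose_mat P * A * P) $$ (i,j) = permute_mat f A $$ (i,j)" .
  qed (insert A P, auto)
  show ?thesis unfolding 3[symmetric] by (rule sim_conj[OF A P PT 1 2])
qed

end


section \<open>Centrosymmetry and adjoint\<close>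

lemma exchange_conj: assumes Q: "(Q :: 'a :: comm_ring_1 mat) \<in> carrier_mat n n"
  shows "exchange_mat n * Q * exchange_mat n = mat n n (\<lambda>(i,j). Q $$ (n - 1 - i, n - 1 - j))"
proof -
  have E: "exchange_mat n \<in> carrier_mat n n" by (simp add: exchange_mat_def)
  have Ed[simp]: "dim_row (exchange_mat n :: 'a mat) = n" "dim_col (exchange_mat n :: 'a mat) = n"
    by (simp_all add: exchange_mat_def)
  have EQ: "(exchange_mat n * Q) $$ (i,k) = Q $$ (n - 1 - i, k)" if i: "i < n" and k: "k < n" for i k
  proof -
    have "(exchange_mat n * Q) $$ (i,k) = (\<Sum>l\<in>{0..<n}. exchange_mat n $$ (i,l) * Q $$ (l,k))"
      using E Q i k by (simp add: scalar_prod_def)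
    also have "\<dots> = (\<Sum>l\<in>{0..<n}. if l = n - 1 - i then Q $$ (n - 1 - i, k) else 0)"
      by (rule sum.cong, insert i, auto simp: exchange_mat_def)
    finally show ?thesis using i by simp
  qed
  show ?thesis
  proof (rule eq_matI)
    fix i j assume "i < dim_row (mat n n (\<lambda>(i, j). Q $$ (n - 1 - i, n - 1 - j)))"
      "j < dim_col (mat n n (\<lambda>(i, j). Q $$ (n - 1 - i, n - 1 - j)))"
    hence i: "i < n" and j: "j < n" by auto
    have "(exchange_mat n * Q * exchange_mat n) $$ (i,j) = (\<Sum>l\<in>{0..<n}. (exchange_mat n * Q) $$ (i,l) * exchange_mat n $$ (l,j))"
      using E Q i j by (simp add: scalar_prod_def)
    also have "\<dots> = (\<Sum>l\<in>{0..<n}. if l = n - 1 - j then Q $$ (n - 1 - i, n - 1 - j) else 0)"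
    proof (rule sum.cong[OF refl])
      fix l assume "l \<in> {0..<n}"
      hence l: "l < n" by auto
      show "(exchange_mat n * Q) $$ (i,l) * exchange_mat n $$ (l,j) = (if l = n - 1 - j then Q $$ (n - 1 - i, n - 1 - j) else 0)"
        unfolding EQ[OF i l] using l j by (auto simp: exchange_mat_def)
    qed
    finally show "(exchange_mat n * Q * exchange_mat n) $$ (i,j) = mat n n (\<lambda>(i, j). Q $$ (n - 1 - i, n - 1 - j)) $$ (i,j)"
      using i j by simp
  qed (insert E Q, auto)
qed

lemma centro_iff: assumes Q: "(Q :: 'a :: comm_ring_1 mat) \<in> carrier_mat n n"
  shows "centrosymmetric Q \<longleftrightarrow> (\<forall>i<n. \<forall>j<n. Q $$ (n - 1 - i, n - 1 - j) = Q $$ (i,j))"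
proof -
  have "centrosymmetric Q \<longleftrightarrow> mat n n (\<lambda>(i,j). Q $$ (n - 1 - i, n - 1 - j)) = Q"
    unfolding centrosymmetric_def using Q exchange_conj[OF Q] by auto
  also have "\<dots> \<longleftrightarrow> (\<forall>i<n. \<forall>j<n. Q $$ (n - 1 - i, n - 1 - j) = Q $$ (i,j))"
    using Q by (auto simp: mat_eq_iff)
  finally show ?thesis .
qed

lemma mat_adjoint_real: "mat_adjoint (A :: real mat) = transpose_mat A"
  by (intro eq_matI, auto simp: mat_adjoint_def mat_of_rows_def)

lemma normal_real: assumes "(A :: real mat) \<in> carrier_mat n n"
  shows "normal_mat A \<longleftrightarrow> A * transpose_mat A = transpose_mat A * A"
  using assms unfolding normal_mat_def mat_adjoint_real by auto




interpretation ofr: map_poly_comm_ring_hom "complex_of_real" ..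

lemma mp_lin: "map_poly complex_of_real [:-a,1:] = [:- complex_of_real a, 1:]" by simp

definition RP :: "real mat \<Rightarrow> nat \<Rightarrow> real \<Rightarrow> real vec \<Rightarrow> bool" where
  "RP A m al u \<longleftrightarrow> A \<in> carrier_mat m m \<and> u \<in> carrier_vec m \<and>
    (\<forall>i<m. \<forall>j<m. A $$ (i,j) \<ge> 0) \<and> (\<forall>i<m. u $ i \<ge> 0) \<and> (\<exists>i<m. u $ i > 0) \<and>
    (\<forall>i<m. \<forall>j<m. A $$ (m - 1 - i, m - 1 - j) = A $$ (i,j)) \<and> (\<forall>i<m. u $ (m - 1 - i) = u $ i) \<and>
    A *\<^sub>v u = al \<cdot>\<^sub>v u \<and> transpose_mat A *\<^sub>v u = al \<cdot>\<^sub>v u \<and>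
    A * transpose_mat A = transpose_mat A * A"

definition cpc :: "real mat \<Rightarrow> complex poly" where
  "cpc A = char_poly (map_mat complex_of_real A)"

definition pie :: "nat \<Rightarrow> nat \<Rightarrow> nat \<Rightarrow> nat" where
  "pie h m i = (if i < h then i else if i < h + m then 2 * h + (i - h) else i - m)"

definition tau :: "nat \<Rightarrow> nat \<Rightarrow> nat \<Rightarrow> nat" where
  "tau h m k = (if k < 2 * h then 2 * h - 1 - k else 2 * h + (m - 1 - (k - 2 * h)))"

lemma pie_lt: "i < 2 * h + m \<Longrightarrow> pie h m i < 2 * h + m"
  unfolding pie_def by auto

lemma pie_bij: "bij_betw (pie h m) {..<2*h+m} {..<2*h+m}"
proof (rule bij_betw_imageI)
  show "inj_on (pie h m) {..<2 * h + m}" unfolding inj_on_def pie_def by auto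
  show "pie h m ` {..<2 * h + m} = {..<2 * h + m}"
  proof
    show "pie h m ` {..<2 * h + m} \<subseteq> {..<2 * h + m}" using pie_lt by auto
    show "{..<2 * h + m} \<subseteq> pie h m ` {..<2 * h + m}"
    proof
      fix k assume k: "k \<in> {..<2 * h + m}"
      define i where "i = (if k < h then k else if k < 2 * h then k + m else k - h)"
      have "i < 2 * h + m" "pie h m i = k" using k unfolding i_def pie_def by auto
      thus "k \<in> pie h m ` {..<2 * h + m}" by force
    qed
  qed
qed

interpretation pie: perm_n "2*h+m" "pie h m" by (unfold_locales, rule pie_bij)

lemma pie_rev: "i < 2 * h + m \<Longrightarrow> pie h m (2 * h + m - 1 - i) = tau h m (pie h m i)"
  unfolding pie_def tau_def by auto

lemma tau_lt: "k < 2 * h + m \<Longrightarrow> tau h m k < 2 * h + m"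
  unfolding tau_def by auto


definition bl0 :: "real mat \<Rightarrow> real mat \<Rightarrow> real mat" where
  "bl0 B A = four_block_mat B (0\<^sub>m (dim_row B) (dim_row A)) (0\<^sub>m (dim_row A) (dim_row B)) A"

definition pvec :: "real mat \<Rightarrow> real vec \<Rightarrow> real vec" where
  "pvec B u = 0\<^sub>v (dim_row B) @\<^sub>v u"

definition qvec :: "real mat \<Rightarrow> real vec \<Rightarrow> real vec" where
  "qvec A w = w @\<^sub>v 0\<^sub>v (dim_row A)"

definition blk :: "real mat \<Rightarrow> real mat \<Rightarrow> real \<Rightarrow> real vec \<Rightarrow> real vec \<Rightarrow> real mat" where
  "blk B A rho w u = bl0 B A + rho \<cdot>\<^sub>m (outer (pvec B u) (qvec A w) + outer (qvec A w) (pvec B u))"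

definition emb :: "real mat \<Rightarrow> real mat \<Rightarrow> real \<Rightarrow> real vec \<Rightarrow> real vec \<Rightarrow> real mat" where
  "emb B A rho w u = permute_mat (pie (dim_row B div 2) (dim_row A)) (blk B A rho w u)"

definition newv :: "real mat \<Rightarrow> real mat \<Rightarrow> real \<Rightarrow> real vec \<Rightarrow> real vec \<Rightarrow> real \<Rightarrow> real \<Rightarrow> real vec" where
  "newv B A rho w u th1 al = permute_vec (pie (dim_row B div 2) (dim_row A))
     ((rho * (w \<bullet> w)) \<cdot>\<^sub>v pvec B u + (th1 - al) \<cdot>\<^sub>v qvec A w)"

lemma pos_self_scalar: assumes u: "u \<in> carrier_vec m" and nn: "\<forall>i<m. u $ i \<ge> (0::real)"
  and pos: "\<exists>i<m. u $ i > 0"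
  shows "u \<bullet> u > 0"
proof -
  obtain k where k: "k < m" "u $ k > 0" using pos by auto
  have "u \<bullet> u = (\<Sum>i\<in>{0..<m}. u $ i * u $ i)" using u by (simp add: scalar_prod_def)
  also have "\<dots> \<ge> u $ k * u $ k"
    by (rule member_le_sum, insert k, auto)
  finally show ?thesis using k by (smt (verit) mult_pos_pos)
qed

lemma block_facts:
  assumes RB: "RP B (2*h) be w" and RA: "RP A m al u"
  defines "M0 \<equiv> bl0 B A" and "p \<equiv> pvec B u" and "q \<equiv> qvec A w"
  shows "M0 \<in> carrier_mat (2*h+m) (2*h+m)" "p \<in> carrier_vec (2*h+m)" "q \<in> carrier_vec (2*h+m)"
    "M0 *\<^sub>v p = al \<cdot>\<^sub>v p" "M0 *\<^sub>v q = be \<cdot>\<^sub>v q"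
    "transpose_mat M0 *\<^sub>v p = al \<cdot>\<^sub>v p" "transpose_mat M0 *\<^sub>v q = be \<cdot>\<^sub>v q"
    "M0 * transpose_mat M0 = transpose_mat M0 * M0"
    "p \<bullet> q = 0" "p \<bullet> p = u \<bullet> u" "q \<bullet> q = w \<bullet> w"
proof -
  note rb = RB[unfolded RP_def] and ra = RA[unfolded RP_def]
  have B: "B \<in> carrier_mat (2*h) (2*h)" and w: "w \<in> carrier_vec (2*h)" using rb by auto
  have A: "A \<in> carrier_mat m m" and u: "u \<in> carrier_vec m" using ra by auto
  have M0: "M0 = four_block_mat B (0\<^sub>m (2*h) m) (0\<^sub>m m (2*h)) A" unfolding M0_def bl0_def using A B by auto
  have p: "p = 0\<^sub>v (2*h) @\<^sub>v u" unfolding p_def pvec_def using B by auto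
  have q: "q = w @\<^sub>v 0\<^sub>v m" unfolding q_def qvec_def using A by auto
  have M0T: "transpose_mat M0 = four_block_mat (transpose_mat B) (0\<^sub>m (2*h) m) (0\<^sub>m m (2*h)) (transpose_mat A)"
    unfolding M0 by (subst transpose_four_block_mat, insert A B, auto)
  have B0: "B *\<^sub>v 0\<^sub>v (2*h) = 0\<^sub>v (2*h)" "transpose_mat B *\<^sub>v 0\<^sub>v (2*h) = 0\<^sub>v (2*h)"
    using B by (auto intro!: eq_vecI)
  have A0: "A *\<^sub>v 0\<^sub>v m = 0\<^sub>v m" "transpose_mat A *\<^sub>v 0\<^sub>v m = 0\<^sub>v m"
    using A by (auto intro!: eq_vecI)
  show Mc: "M0 \<in> carrier_mat (2*h+m) (2*h+m)" unfolding M0 using A B by auto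
  show pc: "p \<in> carrier_vec (2*h+m)" unfolding p using u by auto
  show qc: "q \<in> carrier_vec (2*h+m)" unfolding q using w by auto
  show "M0 *\<^sub>v p = al \<cdot>\<^sub>v p" unfolding M0 p
    by (subst mult_mat_vec_split[OF B A], insert u ra B0 A0, auto intro!: eq_vecI)
  show "M0 *\<^sub>v q = be \<cdot>\<^sub>v q" unfolding M0 q
    by (subst mult_mat_vec_split[OF B A], insert w rb B0 A0 B, auto intro!: eq_vecI)
  show "transpose_mat M0 *\<^sub>v p = al \<cdot>\<^sub>v p" unfolding M0T p
    by (subst mult_mat_vec_split, insert A B u ra B0 A0, auto intro!: eq_vecI)
  show "transpose_mat M0 *\<^sub>v q = be \<cdot>\<^sub>v q" unfolding M0T q
    by (subst mult_mat_vec_split, insert A B w rb B0 A0, auto intro!: eq_vecI)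
  show "M0 * transpose_mat M0 = transpose_mat M0 * M0" unfolding M0T unfolding M0
    by (subst mult_four_block_mat, insert A B, auto,
        subst mult_four_block_mat, insert A B ra rb, auto)
  show "p \<bullet> q = 0" unfolding p q by (subst scalar_prod_append[of _ "2*h" _ m], insert u w, auto)
  show "p \<bullet> p = u \<bullet> u" unfolding p by (subst scalar_prod_append[of _ "2*h" _ m], insert u w, auto)
  show "q \<bullet> q = w \<bullet> w" unfolding q by (subst scalar_prod_append[of _ "2*h" _ m], insert u w, auto)
qed


lemma embed_lemma:
  assumes RB: "RP B (2*h) be w" and RA: "RP A m al u" and rho: "rho \<ge> 0" and th: "th1 > al"
    and K: "(th1 - al) * (th1 - be) = rho^2 * (u \<bullet> u) * (w \<bullet> w)"
  shows "RP (emb B A rho w u) (2*h+m) th1 (newv B A rho w u th1 al)"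
    "cpc (emb B A rho w u) * [:- of_real al, 1:] * [:- of_real be, 1:]
      = cpc B * cpc A * [:- of_real th1, 1:] * [:- of_real (al + be - th1), 1:]"
proof -
  note rb = RB[unfolded RP_def] and ra = RA[unfolded RP_def]
  have B: "B \<in> carrier_mat (2*h) (2*h)" and w: "w \<in> carrier_vec (2*h)" using rb by auto
  have A: "A \<in> carrier_mat m m" and u: "u \<in> carrier_vec m" using ra by auto
  define N where "N = 2*h+m"
  define M0 where "M0 = bl0 B A"
  define p where "p = pvec B u"
  define q where "q = qvec A w"
  define M where "M = blk B A rho w u"
  define s where "s = th1 - al"
  define w1 where "w1 = (rho * (w \<bullet> w)) \<cdot>\<^sub>v p + s \<cdot>\<^sub>v q"
  note bf = block_facts[OF RB RA, folded M0_def p_def q_def N_def]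
  have M: "M = M0 + rho \<cdot>\<^sub>m (outer p q + outer q p)" unfolding M_def blk_def M0_def p_def q_def ..
  have dB: "dim_row B div 2 = h" using B by auto
  have dA: "dim_row A = m" using A by auto
  have Q: "emb B A rho w u = permute_mat (pie h m) M" unfolding emb_def dB dA M_def ..
  have nv: "newv B A rho w u th1 al = permute_vec (pie h m) w1" unfolding newv_def dB dA w1_def p_def q_def s_def ..
  have Mc: "M \<in> carrier_mat N N" unfolding M using bf by auto
  have w1c: "w1 \<in> carrier_vec N" unfolding w1_def using bf by auto
  have pidx: "p $ k = (if k < 2*h then 0 else u $ (k - 2*h))" if "k < N" for k
    using that B u unfolding p_def pvec_def N_def by auto
  have qidx: "q $ k = (if k < 2*h then w $ k else 0)" if "k < N" for k
    using that A w unfolding q_def qvec_def N_def by auto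
  have M0idx: "M0 $$ (k,l) = (if k < 2*h then (if l < 2*h then B $$ (k,l) else 0) else
      (if l < 2*h then 0 else A $$ (k - 2*h, l - 2*h)))" if "k < N" "l < N" for k l
    using that A B unfolding M0_def bl0_def N_def by auto
  have Midx: "M $$ (k,l) = M0 $$ (k,l) + rho * (p $ k * q $ l + q $ k * p $ l)" if "k < N" "l < N" for k l
    using that bf unfolding M N_def by simp
  have w1idx: "w1 $ k = rho * (w \<bullet> w) * p $ k + s * q $ k" if "k < N" for k
    using that bf unfolding w1_def N_def by simp
  have K': "(th1 - al) * (th1 - be) = rho^2 * (p \<bullet> p) * (q \<bullet> q)" unfolding bf K ..
  have eig: "M *\<^sub>v w1 = th1 \<cdot>\<^sub>v w1" unfolding M w1_def s_def bf(11)[symmetric]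
    by (rule merge_eig[OF bf(1-5) bf(9) K'])
  have MT: "transpose_mat M = transpose_mat M0 + rho \<cdot>\<^sub>m (outer p q + outer q p)"
    unfolding M using bf by (auto intro!: eq_matI)
  have eigT: "transpose_mat M *\<^sub>v w1 = th1 \<cdot>\<^sub>v w1" unfolding MT w1_def s_def bf(11)[symmetric]
    by (rule merge_eig[OF _ bf(2,3) bf(6,7) bf(9) K'], insert bf, auto)
  have nor: "M * transpose_mat M = transpose_mat M * M" unfolding M
    by (rule normal_merge[OF bf(1-8)])
  have tauN: "tau h m k < N" if "k < N" for k using tau_lt that unfolding N_def by auto
  have tault: "tau h m k < 2*h \<longleftrightarrow> k < 2*h" if "k < N" for k using that unfolding tau_def N_def by auto
  have Bc: "B $$ (2*h - 1 - i, 2*h - 1 - j) = B $$ (i,j)" if "i < 2*h" "j < 2*h" for i j using rb that by auto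
  have Ac: "A $$ (m - 1 - i, m - 1 - j) = A $$ (i,j)" if "i < m" "j < m" for i j using ra that by auto
  have wc: "w $ (2*h - 1 - i) = w $ i" if "i < 2*h" for i using rb that by auto
  have uc: "u $ (m - 1 - i) = u $ i" if "i < m" for i using ra that by auto
  have ptau: "p $ tau h m k = p $ k" if k: "k < N" for k
  proof (cases "k < 2*h")
    case False
    hence "tau h m k - 2*h = m - 1 - (k - 2*h)" "k - 2*h < m" using k unfolding tau_def N_def by auto
    thus ?thesis using False k uc[of "k - 2*h"] by (simp add: pidx tauN tault)
  qed (insert k, simp add: pidx tauN tault)
  have qtau: "q $ tau h m k = q $ k" if k: "k < N" for k
  proof (cases "k < 2*h")
    case True
    hence "tau h m k = 2*h - 1 - k" unfolding tau_def by auto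
    thus ?thesis using True k wc[of k] qidx[of "2*h-1-k"] qidx[of k] by (simp add: N_def)
  qed (insert k, simp add: qidx tauN tault)
  have M0tau: "M0 $$ (tau h m k, tau h m l) = M0 $$ (k,l)" if k: "k < N" and l: "l < N" for k l
  proof -
    have t1: "k < 2*h \<Longrightarrow> tau h m k = 2*h - 1 - k" "l < 2*h \<Longrightarrow> tau h m l = 2*h - 1 - l"
      unfolding tau_def by auto
    have t2: "\<not> k < 2*h \<Longrightarrow> tau h m k - 2*h = m - 1 - (k - 2*h)" "\<not> l < 2*h \<Longrightarrow> tau h m l - 2*h = m - 1 - (l - 2*h)"
      using k l unfolding tau_def N_def by auto
    show ?thesis using k l t1 t2 Bc[of k l] Ac[of "k - 2*h" "l - 2*h"]
      by (auto simp: M0idx tauN tault N_def)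
  qed
  have Mtau: "M $$ (tau h m k, tau h m l) = M $$ (k,l)" if k: "k < N" and l: "l < N" for k l
    using k l by (simp add: Midx tauN M0tau ptau qtau)
  have w1tau: "w1 $ tau h m k = w1 $ k" if k: "k < N" for k
    using k by (simp add: w1idx tauN ptau qtau)
  have pnn: "p $ k \<ge> 0" if "k < N" for k using that ra by (auto simp: pidx N_def)
  have qnn: "q $ k \<ge> 0" if "k < N" for k using that rb by (auto simp: qidx N_def)
  have M0nn: "M0 $$ (k,l) \<ge> 0" if "k < N" "l < N" for k l using that ra rb by (auto simp: M0idx N_def)
  have Mnn: "M $$ (k,l) \<ge> 0" if "k < N" "l < N" for k l using that rho
    by (simp add: Midx M0nn pnn qnn)
  have ww: "w \<bullet> w \<ge> 0" using pos_self_scalar[OF w] rb by auto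
  have w1nn: "w1 $ k \<ge> 0" if "k < N" for k using that rho th ww
    by (simp add: w1idx pnn qnn s_def)
  obtain k where k: "k < 2*h" "w $ k > 0" using rb by auto
  have kN: "k < N" using k unfolding N_def by auto
  have w1k: "w1 $ k > 0" using k kN th by (simp add: w1idx pidx qidx s_def)
  define i where "i = (if k < h then k else k + m)"
  have iN: "i < N" and pii: "pie h m i = k" using k unfolding i_def N_def pie_def by auto
  have pieN: "pie h m i < N" if "i < N" for i using pie_lt that unfolding N_def by auto
  have Qc: "permute_mat (pie h m) M \<in> carrier_mat N N" using Mc by auto
  show "RP (emb B A rho w u) (2*h+m) th1 (newv B A rho w u th1 al)"
    unfolding RP_def Q nv N_def[symmetric]
  proof (intro conjI allI impI)
    show "permute_mat (pie h m) M \<in> carrier_mat N N" by fact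
    show "permute_vec (pie h m) w1 \<in> carrier_vec N" using w1c by (auto simp: permute_vec_def)
    show "\<exists>i<N. 0 < permute_vec (pie h m) w1 $ i" using iN pii w1k w1c by (intro exI[of _ i], auto)
    fix i assume i: "i < N"
    show "0 \<le> permute_vec (pie h m) w1 $ i" using i w1c pieN w1nn by auto
    show "permute_vec (pie h m) w1 $ (N - 1 - i) = permute_vec (pie h m) w1 $ i"
      using i w1c pieN w1tau pie_rev[of i h m] unfolding N_def by auto
    fix j assume j: "j < N"
    show "0 \<le> permute_mat (pie h m) M $$ (i, j)" using i j Mc pieN Mnn by auto
    show "permute_mat (pie h m) M $$ (N - 1 - i, N - 1 - j) = permute_mat (pie h m) M $$ (i, j)"
      using i j Mc pieN Mtau pie_rev[of i h m] pie_rev[of j h m] unfolding N_def by auto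
  next
    show "permute_mat (pie h m) M *\<^sub>v permute_vec (pie h m) w1 = th1 \<cdot>\<^sub>v permute_vec (pie h m) w1"
      using pie.permute_mult_vec[where A=M and v=w1 and h=h and m=m] Mc w1c eig unfolding N_def
      by (auto simp: permute_vec_def pie_lt intro!: eq_vecI)
    show "transpose_mat (permute_mat (pie h m) M) *\<^sub>v permute_vec (pie h m) w1 = th1 \<cdot>\<^sub>v permute_vec (pie h m) w1"
      using pie.permute_mult_vec[where A="transpose_mat M" and v=w1 and h=h and m=m] pie.permute_transpose[where A=M and h=h and m=m] Mc w1c eigT unfolding N_def
      by (auto simp: permute_vec_def pie_lt intro!: eq_vecI)
    show "permute_mat (pie h m) M * transpose_mat (permute_mat (pie h m) M) =
      transpose_mat (permute_mat (pie h m) M) * permute_mat (pie h m) M"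
      using pie.permute_mult[where A=M and B="transpose_mat M" and h=h and m=m] pie.permute_mult[where B=M and A="transpose_mat M" and h=h and m=m]
        pie.permute_transpose[where A=M and h=h and m=m] Mc nor unfolding N_def by auto
  qed
  show "cpc (emb B A rho w u) * [:- of_real al, 1:] * [:- of_real be, 1:]
      = cpc B * cpc A * [:- of_real th1, 1:] * [:- of_real (al + be - th1), 1:]"
  proof -
    have qq: "q \<bullet> q \<noteq> 0" using bf(11) pos_self_scalar[OF w] rb by auto
    have j0: "q $ k \<noteq> 0" using k kN qidx by auto
    have i0: "((rho * (q \<bullet> q)) \<cdot>\<^sub>v p + (th1 - al) \<cdot>\<^sub>v q) $ k \<noteq> 0"
      using w1k kN bf unfolding w1_def s_def by (simp add: N_def)
    have mc: "char_poly M * [:-al,1:] * [:-be,1:] = char_poly M0 * [:-th1,1:] * [:-(al + be - th1),1:]"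
      unfolding M by (rule merge_char[OF bf(1-5) bf(9) qq kN j0 K' refl kN i0])
    have cM: "cpc M = map_poly of_real (char_poly M)" unfolding cpc_def
      by (rule of_real_hom.char_poly_hom[OF Mc])
    have M0c: "M0 \<in> carrier_mat N N" using bf unfolding N_def by auto
    have cM0: "cpc M0 = map_poly of_real (char_poly M0)" unfolding cpc_def
      by (rule of_real_hom.char_poly_hom[OF M0c])
    have 1: "cpc M * [:- of_real al, 1:] * [:- of_real be, 1:] = cpc M0 * [:- of_real th1, 1:] * [:- of_real (al + be - th1), 1:]"
      using arg_cong[OF mc, of "map_poly complex_of_real"] unfolding cM cM0 ofr.hom_mult mp_lin .
    have 2: "cpc (emb B A rho w u) = cpc M"
    proof -
      have "map_mat complex_of_real (emb B A rho w u) = permute_mat (pie h m) (map_mat complex_of_real M)"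
        unfolding Q using Mc by (auto intro!: eq_matI simp: pie_lt N_def)
      moreover have "similar_mat (map_mat complex_of_real M) (permute_mat (pie h m) (map_mat complex_of_real M))"
        by (rule pie.permute_similar[where h=h and m=m], insert Mc, auto simp: N_def)
      ultimately show ?thesis unfolding cpc_def using char_poly_similar by metis
    qed
    have 3: "cpc M0 = cpc B * cpc A"
    proof -
      have "map_mat complex_of_real M0 = four_block_mat (map_mat complex_of_real B) (0\<^sub>m (2*h) m) (0\<^sub>m m (2*h)) (map_mat complex_of_real A)"
        unfolding M0_def bl0_def using A B by (auto intro!: eq_matI)
      moreover have "char_poly (four_block_mat (map_mat complex_of_real B) (0\<^sub>m (2*h) m) (0\<^sub>m m (2*h)) (map_mat complex_of_real A))
        = char_poly (map_mat complex_of_real B) * char_poly (map_mat complex_of_real A)"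
        by (rule char_poly_0_block[OF refl], insert A B char_poly_factorized[of "map_mat complex_of_real B" "2*h"]
            char_poly_factorized[of "map_mat complex_of_real A" m], auto)
      ultimately show ?thesis unfolding cpc_def by simp
    qed
    show ?thesis using 1 unfolding 2 3 .
  qed
qed


section \<open>Suleimanova-type symmetric realizations\<close>

definition K2 :: "real \<Rightarrow> real \<Rightarrow> real mat" where
  "K2 al nu = mat 2 2 (\<lambda>(i,j). if i = j then (al + nu) / 2 else (al - nu) / 2)"

definition one_v :: "nat \<Rightarrow> real vec" where "one_v k = vec k (\<lambda>_. 1)"

lemma cpc_diag: "cpc (a \<cdot>\<^sub>m 1\<^sub>m k) = [:- complex_of_real a, 1:] ^ k"
proof -
  have c: "map_mat complex_of_real (a \<cdot>\<^sub>m 1\<^sub>m k) \<in> carrier_mat k k" by auto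
  have ut: "upper_triangular (map_mat complex_of_real (a \<cdot>\<^sub>m 1\<^sub>m k))" by (auto simp: upper_triangular_def)
  have d: "diag_mat (map_mat complex_of_real (a \<cdot>\<^sub>m 1\<^sub>m k)) = replicate k (complex_of_real a)"
    by (auto simp: diag_mat_def list_eq_iff_nth_eq)
  show ?thesis unfolding cpc_def char_poly_upper_triangular[OF c ut] d
    by (simp add: prod_list_replicate)
qed

lemma K2_RP: assumes "al + nu \<ge> 0" "al - nu \<ge> 0"
  shows "RP (K2 al nu) 2 al (one_v 2)"
proof -
  have KT: "transpose_mat (K2 al nu) = K2 al nu" by (auto simp: K2_def intro!: eq_matI)
  have ev: "K2 al nu *\<^sub>v one_v 2 = al \<cdot>\<^sub>v one_v 2"
  proof (rule eq_vecI)
    fix i assume "i < dim_vec (al \<cdot>\<^sub>v one_v 2)"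
    hence i: "i < 2" by (auto simp: one_v_def)
    have "(K2 al nu *\<^sub>v one_v 2) $ i = (\<Sum>k\<in>{0..<2}. K2 al nu $$ (i,k) * one_v 2 $ k)"
      using i by (simp add: K2_def one_v_def scalar_prod_def)
    also have "\<dots> = al" using i by (auto simp: K2_def one_v_def numeral_2_eq_2 field_simps)
    finally show "(K2 al nu *\<^sub>v one_v 2) $ i = (al \<cdot>\<^sub>v one_v 2) $ i" using i by (simp add: one_v_def)
  qed (auto simp: K2_def one_v_def)
  show ?thesis unfolding RP_def KT using assms ev
    by (auto simp: K2_def one_v_def less_2_cases_iff)
qed

lemma K2_cpc: "cpc (K2 al nu) = [:- complex_of_real al, 1:] * [:- complex_of_real nu, 1:]"
proof -
  define e where "e = vec 2 (\<lambda>_. 1 :: complex)"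
  define b where "b = complex_of_real ((al - nu) / 2)"
  define D where "D = complex_of_real nu \<cdot>\<^sub>m (1\<^sub>m 2 :: complex mat)"
  have D: "D \<in> carrier_mat 2 2" unfolding D_def by auto
  have e: "e \<in> carrier_vec 2" unfolding e_def by auto
  have y: "b \<cdot>\<^sub>v e \<in> carrier_vec 2" unfolding e_def by auto
  have ev: "D *\<^sub>v e = complex_of_real nu \<cdot>\<^sub>v e" unfolding D_def e_def
    by (intro eq_vecI, auto simp: scalar_prod_def numeral_2_eq_2)
  have Km: "map_mat complex_of_real (K2 al nu) = D + outer e (b \<cdot>\<^sub>v e)"
    by (intro eq_matI, auto simp: K2_def D_def e_def b_def field_simps)
  have br: "char_poly (D + outer e (b \<cdot>\<^sub>v e)) * [:-complex_of_real nu,1:] = char_poly D * [:-(complex_of_real nu + (b \<cdot>\<^sub>v e) \<bullet> e), 1:]"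
    by (rule brauer[OF D e y ev, of 0], auto simp: e_def)
  have be: "complex_of_real nu + (b \<cdot>\<^sub>v e) \<bullet> e = complex_of_real al"
    unfolding b_def e_def by (simp add: scalar_prod_def numeral_2_eq_2 field_simps)
  have cD: "char_poly D = [:-complex_of_real nu,1:] * [:-complex_of_real nu,1:]"
  proof -
    have "map_mat complex_of_real (nu \<cdot>\<^sub>m 1\<^sub>m 2) = D" unfolding D_def by (auto intro!: eq_matI)
    thus ?thesis using cpc_diag[of nu 2] unfolding cpc_def by (simp add: power2_eq_square)
  qed
  have "[:-complex_of_real nu,1:] * cpc (K2 al nu) = [:-complex_of_real nu,1:] * ([:- complex_of_real al, 1:] * [:- complex_of_real nu, 1:])"
    using br unfolding be cD cpc_def Km by (simp only: mult.assoc mult.commute mult.left_commute)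
  thus ?thesis by (subst (asm) mult_left_cancel, auto)
qed




lemma one_RP: assumes "al \<ge> 0" shows "RP (mat 1 1 (\<lambda>_. al)) 1 al (one_v 1)"
  using assms unfolding RP_def by (auto simp: one_v_def scalar_prod_def intro!: eq_vecI eq_matI)

lemma one_cpc: "cpc (mat 1 1 (\<lambda>_. al)) = [:- complex_of_real al, 1:]"
proof -
  have c: "map_mat complex_of_real (mat 1 1 (\<lambda>_. al)) \<in> carrier_mat 1 1" by auto
  have ut: "upper_triangular (map_mat complex_of_real (mat 1 1 (\<lambda>_. al)))" by (auto simp: upper_triangular_def)
  show ?thesis unfolding cpc_def char_poly_upper_triangular[OF c ut] by (simp add: diag_mat_def)
qed

lemma sul: "(\<forall>l\<in>set ls. l < 0) \<Longrightarrow> al \<ge> 0 \<Longrightarrow> al + sum_list ls \<ge> 0 \<Longrightarrow>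
  \<exists>A u. RP A (length ls + 1) al u \<and> cpc A = [:- complex_of_real al, 1:] * (\<Prod>l\<leftarrow>ls. [:- complex_of_real l, 1:])"
proof (induction ls arbitrary: al rule: induct_list012)
  case 1
  show ?case using one_RP[OF 1(2)] one_cpc by auto
next
  case (2 nu)
  have R: "RP (K2 al nu) 2 al (one_v 2)" by (rule K2_RP, insert 2, auto)
  have l: "length [nu] + 1 = 2" by simp
  have R2: "RP (K2 al nu) (length [nu] + 1) al (one_v 2)" unfolding l by (rule R)
  show ?case by (intro exI conjI, rule R2, simp add: K2_cpc)
next
  case (3 nu1 nu2 ls)
  have neg: "\<forall>l\<in>set ls. l < 0" and n1: "nu1 < 0" and n2: "nu2 < 0" using 3(3) by auto
  have sl: "sum_list ls \<le> 0" using neg by (induct ls, auto)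
  define al' where "al' = al + nu1 + nu2"
  have al': "al' \<ge> 0" "al' + sum_list ls \<ge> 0" using 3(5) sl unfolding al'_def by auto
  from 3(1)[OF neg al'] obtain A u where RA: "RP A (length ls + 1) al' u"
    and cA: "cpc A = [:- complex_of_real al', 1:] * (\<Prod>l\<leftarrow>ls. [:- complex_of_real l, 1:])" by auto
  define be where "be = - nu1"
  have RB: "RP (K2 be nu1) (2*1) be (one_v 2)" using K2_RP[of be nu1] n1 unfolding be_def by auto
  have uu: "u \<bullet> u > 0" using pos_self_scalar[of u "length ls + 1"] RA unfolding RP_def by auto
  have ww: "one_v 2 \<bullet> one_v 2 = 2" by (simp add: one_v_def scalar_prod_def numeral_2_eq_2)
  have t1: "al - al' > 0" unfolding al'_def using n1 n2 by auto
  have t2: "al - be \<ge> 0" unfolding be_def using 3(5) sl n2 by auto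
  define rho where "rho = sqrt ((al - al') * (al - be) / ((u \<bullet> u) * (one_v 2 \<bullet> one_v 2)))"
  have rho: "rho \<ge> 0" unfolding rho_def using t1 t2 uu ww by auto
  have K: "(al - al') * (al - be) = rho^2 * (u \<bullet> u) * (one_v 2 \<bullet> one_v 2)"
    unfolding rho_def using t1 t2 uu ww by (simp add: real_sqrt_pow2 divide_nonneg_pos)
  note E = embed_lemma[OF RB RA rho _ K]
  have len: "2 * 1 + (length ls + 1) = length (nu1 # nu2 # ls) + 1" by simp
  have e2: "al' + be - al = nu2" unfolding al'_def be_def by simp
  have "[:- complex_of_real al', 1:] * [:- complex_of_real be, 1:] * cpc (emb (K2 be nu1) A rho (one_v 2) u)
    = [:- complex_of_real al', 1:] * [:- complex_of_real be, 1:] * ([:- complex_of_real al, 1:] * (\<Prod>l\<leftarrow>nu1 # nu2 # ls. [:- complex_of_real l, 1:]))"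
    using E(2) t1 unfolding K2_cpc cA e2 by (simp only: mult.assoc mult.commute mult.left_commute, simp)
  hence "cpc (emb (K2 be nu1) A rho (one_v 2) u) = [:- complex_of_real al, 1:] * (\<Prod>l\<leftarrow>nu1 # nu2 # ls. [:- complex_of_real l, 1:])"
    by (subst (asm) mult_left_cancel, auto)
  moreover have t1': "al' < al" using t1 by simp
  ultimately show ?case using E(1)[OF t1', unfolded len] by blast
qed




definition ee :: "nat \<Rightarrow> int \<Rightarrow> complex" where
  "ee k t = cis (pi * real k * real_of_int t / 4)"

lemma ee_as_pow: "ee k t = ee 1 t ^ k"
  unfolding ee_def DeMoivre by (simp add: algebra_simps)

lemma ee_sym: "ee k (int j) = ee j (int k)"
  unfolding ee_def by (simp add: algebra_simps)

lemma ee_add: "ee k t * ee k s = ee k (t + s)"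
  unfolding ee_def cis_mult by (rule arg_cong[where f=cis], simp add: field_simps)

lemma ee_neg: "ee k (- t) = cnj (ee k t)"
  unfolding ee_def cis_cnj by simp

lemma ee_period: "ee k (t + 8 * s) = ee k t"
proof -
  have "ee k (t + 8 * s) = ee k t * ee k (8 * s)" by (simp add: ee_add)
  also have "ee k (8 * s) = cis (2 * pi * of_int (int k * s))" unfolding ee_def
    by (simp add: algebra_simps)
  also have "\<dots> = 1" by (rule cis_multiple_2pi, auto)
  finally show ?thesis by simp
qed

lemma ee_conj8: "k \<le> 8 \<Longrightarrow> ee (8 - k) t = cnj (ee k t)"
proof -
  assume k: "k \<le> 8"
  have "ee (8 - k) t = cis (2 * pi * of_int t + pi * real k * (- real_of_int t) / 4)" unfolding ee_def
    using k by (intro arg_cong[where f=cis], simp add: of_nat_diff field_simps)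
  also have "\<dots> = cis (2 * pi * of_int t) * cis (pi * real k * (- real_of_int t) / 4)" by (simp only: cis_mult)
  also have "cis (2 * pi * of_int t) = 1" by (rule cis_multiple_2pi, auto)
  finally show ?thesis unfolding ee_def cis_cnj by simp
qed

lemma ee_orth: assumes "\<not> 8 dvd t" shows "(\<Sum>k<8. ee k t) = 0"
proof -
  define z where "z = ee 1 t"
  have z8: "z ^ 8 = 1"
  proof -
    have "z ^ 8 = ee 8 t" unfolding z_def by (rule ee_as_pow[symmetric])
    also have "\<dots> = cis (2 * pi * of_int t)" unfolding ee_def by (simp add: algebra_simps)
    also have "\<dots> = 1" by (rule cis_multiple_2pi, auto)
    finally show ?thesis .
  qed
  have z1: "z \<noteq> 1"
  proof
    assume "z = 1"
    hence "cos (pi * real_of_int t / 4) = 1" unfolding z_def ee_def by (metis Re_complex_of_real cis.sel(1) mult.right_neutral of_nat_1 one_complex.sel(1))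
    then obtain n :: int where "pi * real_of_int t / 4 = n * 2 * pi" unfolding cos_one_2pi_int by auto
    hence "real_of_int t = real_of_int (8 * n)" by (simp add: field_simps)
    hence "t = 8 * n" by linarith
    thus False using assms by auto
  qed
  have "(\<Sum>k<8. ee k t) = (\<Sum>k<8. z ^ k)" unfolding z_def by (rule sum.cong[OF refl], rule ee_as_pow)
  also have "\<dots> = 0" unfolding sum_gp_strict using z1 z8 by simp
  finally show ?thesis .
qed

lemma ee_diff: "ee k (a - b) = ee k a * ee k (- b)"
  using ee_add[of k a "- b"] by simp

lemma ee_zero: "ee k 0 = 1" unfolding ee_def by simp

lemma ee_zero': "ee 0 t = 1" unfolding ee_def by simp


lemma sum8: "(\<Sum>k<(8::nat). f k) = f 0 + f 1 + f 2 + f 3 + f 4 + f 5 + f 6 + (f 7 :: 'a :: comm_monoid_add)"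
  by (simp add: eval_nat_numeral ac_simps)

lemma ee_sum_delta: assumes k: "k < 8" shows "(\<Sum>j<8. ee k (- int j)) = (if k = 0 then 8 else 0)"
proof (cases "k = 0")
  case True thus ?thesis by (simp add: ee_def)
next
  case False
  have "(\<Sum>j<8. ee k (- int j)) = (\<Sum>j<8. ee j (- int k))" by (rule sum.cong, auto simp: ee_def intro!: arg_cong[where f=cis])
  also have "\<dots> = 0" by (rule ee_orth, insert k False, presburger)
  finally show ?thesis using False by simp
qed

definition evl :: "real \<Rightarrow> real \<Rightarrow> complex \<Rightarrow> complex \<Rightarrow> complex \<Rightarrow> nat \<Rightarrow> complex" where
  "evl r mu z1 z2 z3 k = [of_real r, z1, z2, z3, of_real mu, cnj z3, cnj z2, cnj z1] ! k"

definition cre :: "real \<Rightarrow> real \<Rightarrow> complex \<Rightarrow> complex \<Rightarrow> complex \<Rightarrow> int \<Rightarrow> real" where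
  "cre r mu z1 z2 z3 t = (r + mu * Re (ee 4 t) + 2 * Re (z1 * ee 1 t) + 2 * Re (z2 * ee 2 t) + 2 * Re (z3 * ee 3 t)) / 8"

lemma dft_entry: "(\<Sum>k<8. evl r mu z1 z2 z3 k * ee k t) = of_real (8 * cre r mu z1 z2 z3 t)"
proof -
  have e5: "ee 5 t = cnj (ee 3 t)" using ee_conj8[of 3 t] by simp
  have e6: "ee 6 t = cnj (ee 2 t)" using ee_conj8[of 2 t] by simp
  have e7: "ee 7 t = cnj (ee 1 t)" using ee_conj8[of 1 t] by simp
  have e4: "Im (ee 4 t) = 0" using ee_conj8[of 4 t] by (simp add: complex_eq_iff)
  have "(\<Sum>k<8. evl r mu z1 z2 z3 k * ee k t) = of_real r + (z1 * ee 1 t + cnj (z1 * ee 1 t)) + (z2 * ee 2 t + cnj (z2 * ee 2 t))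
     + (z3 * ee 3 t + cnj (z3 * ee 3 t)) + of_real mu * ee 4 t"
    unfolding sum8 by (simp add: evl_def ee_zero' e5 e6 e7)
  also have "ee 4 t = of_real (Re (ee 4 t))" using e4 by (simp add: complex_eq_iff)
  finally show ?thesis unfolding complex_add_cnj cre_def by simp
qed

lemma cre_period: "cre r mu z1 z2 z3 (t + 8 * s) = cre r mu z1 z2 z3 t"
  unfolding cre_def ee_period ..

lemma cre_cong: "t mod 8 = s mod 8 \<Longrightarrow> cre r mu z1 z2 z3 t = cre r mu z1 z2 z3 s"
proof -
  assume "t mod 8 = s mod 8"
  hence "8 dvd (t - s)" by (simp add: mod_eq_dvd_iff)
  hence "t = s + 8 * ((t - s) div 8)" by auto
  thus ?thesis using cre_period[of r mu z1 z2 z3 s "(t - s) div 8"] by simp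
qed

lemma cre_nonneg: assumes "r \<ge> \<bar>mu\<bar> + 2 * (cmod z1 + cmod z2 + cmod z3)"
  shows "cre r mu z1 z2 z3 t \<ge> 0"
proof -
  have b: "\<bar>Re (z * ee k t)\<bar> \<le> cmod z" for z k
    using abs_Re_le_cmod[of "z * ee k t"] by (simp add: norm_mult ee_def)
  have b4: "\<bar>mu * Re (ee 4 t)\<bar> \<le> \<bar>mu\<bar>"
    using b[of 1 4] by (simp add: abs_mult mult_left_le)
  have "0 \<le> r + mu * Re (ee 4 t) + 2 * Re (z1 * ee 1 t) + 2 * Re (z2 * ee 2 t) + 2 * Re (z3 * ee 3 t)"
    using assms b[of z1 1] b[of z2 2] b[of z3 3] b4 unfolding abs_le_iff by (smt (verit))
  thus ?thesis unfolding cre_def by simp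
qed

lemma cre_rowsum: "(\<Sum>j<8. cre r mu z1 z2 z3 (int i - int j)) = r"
proof -
  have "complex_of_real (8 * (\<Sum>j<8. cre r mu z1 z2 z3 (int i - int j)))
    = (\<Sum>j<8. \<Sum>k<8. evl r mu z1 z2 z3 k * ee k (int i - int j))"
    by (simp add: dft_entry sum_distrib_left)
  also have "\<dots> = (\<Sum>k<8. evl r mu z1 z2 z3 k * ee k (int i) * (\<Sum>j<8. ee k (- int j)))"
    by (subst sum.swap, rule sum.cong, auto simp: sum_distrib_left ee_diff ac_simps)
  also have "\<dots> = (\<Sum>k<(8::nat). if k = 0 then 8 * of_real r else 0)"
    by (rule sum.cong, auto simp: ee_sum_delta evl_def ee_zero')
  also have "\<dots> = complex_of_real (8 * r)" by simp
  finally show ?thesis by (metis of_real_eq_iff mult_cancel_left zero_neq_numeral)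
qed

lemma cre_colsum: "(\<Sum>i<8. cre r mu z1 z2 z3 (int i - int j)) = r"
proof -
  have "complex_of_real (8 * (\<Sum>i<8. cre r mu z1 z2 z3 (int i - int j)))
    = (\<Sum>i<8. \<Sum>k<8. evl r mu z1 z2 z3 k * ee k (int i - int j))"
    by (simp add: dft_entry sum_distrib_left)
  also have "\<dots> = (\<Sum>k<8. evl r mu z1 z2 z3 k * ee k (- int j) * cnj (\<Sum>i<8. ee k (- int i)))"
  proof (subst sum.swap, rule sum.cong[OF refl])
    fix k
    have "(\<Sum>i<8. evl r mu z1 z2 z3 k * ee k (int i - int j)) = (\<Sum>i<8. evl r mu z1 z2 z3 k * ee k (- int j) * cnj (ee k (- int i)))"
      by (rule sum.cong, auto simp: ee_neg[symmetric] ee_add)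
    thus "(\<Sum>i<8. evl r mu z1 z2 z3 k * ee k (int i - int j)) = evl r mu z1 z2 z3 k * ee k (- int j) * cnj (\<Sum>i<8. ee k (- int i))"
      by (simp add: sum_distrib_left)
  qed
  also have "\<dots> = (\<Sum>k<(8::nat). if k = 0 then 8 * of_real r else 0)"
    by (rule sum.cong, auto simp: ee_sum_delta evl_def ee_zero')
  also have "\<dots> = complex_of_real (8 * r)" by simp
  finally show ?thesis by (metis of_real_eq_iff mult_cancel_left zero_neq_numeral)
qed


definition Fm :: "complex mat" where "Fm = mat 8 8 (\<lambda>(i,k). ee k (int i))"
definition Gm :: "complex mat" where "Gm = mat 8 8 (\<lambda>(k,j). ee k (- int j) / 8)"
definition Dg :: "(nat \<Rightarrow> complex) \<Rightarrow> complex mat" where "Dg d = mat 8 8 (\<lambda>(i,j). if i = j then d i else 0)"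

lemma FGD_carrier[simp]: "Fm \<in> carrier_mat 8 8" "Gm \<in> carrier_mat 8 8" "Dg d \<in> carrier_mat 8 8"
  by (auto simp: Fm_def Gm_def Dg_def)

lemma FGD_dims[simp]: "dim_row Fm = 8" "dim_col Fm = 8" "dim_row Gm = 8" "dim_col Gm = 8"
  "dim_row (Dg d) = 8" "dim_col (Dg d) = 8"
  by (auto simp: Fm_def Gm_def Dg_def)

lemma sum8_lt: "(\<Sum>k\<in>{0..<8}. f k) = (\<Sum>k<(8::nat). f k)" by (simp add: atLeast0LessThan)

lemma FDG_entry: assumes i: "i < 8" and j: "j < 8"
  shows "(Fm * Dg d * Gm) $$ (i,j) = (\<Sum>k<8. d k * ee k (int i - int j)) / 8"
proof -
  have FD: "(Fm * Dg d) $$ (i,k) = ee k (int i) * d k" if k: "k < 8" for k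
  proof -
    have "(Fm * Dg d) $$ (i,k) = (\<Sum>l\<in>{0..<8}. Fm $$ (i,l) * Dg d $$ (l,k))"
      using i k by (simp add: scalar_prod_def)
    also have "\<dots> = (\<Sum>l\<in>{0..<8}. if l = k then ee k (int i) * d k else 0)"
      by (rule sum.cong, insert i k, auto simp: Fm_def Dg_def)
    finally show ?thesis using k by simp
  qed
  have "(Fm * Dg d * Gm) $$ (i,j) = (\<Sum>k\<in>{0..<8}. (Fm * Dg d) $$ (i,k) * Gm $$ (k,j))"
    using i j by (simp add: scalar_prod_def)
  also have "\<dots> = (\<Sum>k<8. d k * ee k (int i - int j) / 8)" unfolding sum8_lt
  proof (rule sum.cong[OF refl])
    fix k assume "k \<in> {..<8::nat}"
    hence k: "k < 8" by auto
    show "(Fm * Dg d) $$ (i,k) * Gm $$ (k,j) = d k * ee k (int i - int j) / 8"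
      unfolding FD[OF k] using k j by (simp add: Gm_def ee_diff)
  qed
  finally show ?thesis by (simp add: sum_divide_distrib)
qed

lemma FG: "Fm * Gm = 1\<^sub>m 8"
proof (rule eq_matI)
  fix i j assume "i < dim_row (1\<^sub>m 8 :: complex mat)" "j < dim_col (1\<^sub>m 8 :: complex mat)"
  hence i: "i < 8" and j: "j < 8" by auto
  have "(Fm * Gm) $$ (i,j) = (\<Sum>k<8. ee k (int i - int j)) / 8"
    using i j by (simp add: scalar_prod_def sum8_lt Fm_def Gm_def ee_diff sum_divide_distrib)
  also have "\<dots> = 1\<^sub>m 8 $$ (i,j)"
  proof (cases "i = j")
    case True thus ?thesis using i by (simp add: ee_zero)
  next
    case False
    have "\<not> 8 dvd (int i - int j)" using i j False by presburger
    thus ?thesis using ee_orth[of "int i - int j"] i j False by simp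
  qed
  finally show "(Fm * Gm) $$ (i,j) = 1\<^sub>m 8 $$ (i,j)" .
qed auto

lemma GF: "Gm * Fm = 1\<^sub>m 8"
proof (rule eq_matI)
  fix k l assume "k < dim_row (1\<^sub>m 8 :: complex mat)" "l < dim_col (1\<^sub>m 8 :: complex mat)"
  hence k: "k < 8" and l: "l < 8" by auto
  have e: "ee k (- int i) * ee l (int i) = ee i (int l - int k)" for i
    unfolding ee_def cis_mult by (rule arg_cong[where f=cis], simp add: field_simps)
  have "(Gm * Fm) $$ (k,l) = (\<Sum>i<8. ee k (- int i) * ee l (int i)) / 8"
    using k l by (simp add: scalar_prod_def sum8_lt Fm_def Gm_def sum_divide_distrib)
  also have "\<dots> = (\<Sum>i<8. ee i (int l - int k)) / 8" unfolding e ..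
  also have "\<dots> = 1\<^sub>m 8 $$ (k,l)"
  proof (cases "k = l")
    case True thus ?thesis using k by (simp add: ee_zero)
  next
    case False
    have "\<not> 8 dvd (int l - int k)" using k l False by presburger
    thus ?thesis using ee_orth[of "int l - int k"] k l False by simp
  qed
  finally show "(Gm * Fm) $$ (k,l) = 1\<^sub>m 8 $$ (k,l)" .
qed auto

definition Cm :: "real \<Rightarrow> real \<Rightarrow> complex \<Rightarrow> complex \<Rightarrow> complex \<Rightarrow> real mat" where
  "Cm r mu z1 z2 z3 = mat 8 8 (\<lambda>(i,j). cre r mu z1 z2 z3 (int i - int j))"

lemma Cm_carrier[simp]: "Cm r mu z1 z2 z3 \<in> carrier_mat 8 8" by (simp add: Cm_def)

lemma Cm_dims[simp]: "dim_row (Cm r mu z1 z2 z3) = 8" "dim_col (Cm r mu z1 z2 z3) = 8" by (simp_all add: Cm_def)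

lemma Cm_dft: "map_mat complex_of_real (Cm r mu z1 z2 z3) = Fm * Dg (evl r mu z1 z2 z3) * Gm"
proof (rule eq_matI)
  fix i j assume "i < dim_row (Fm * Dg (evl r mu z1 z2 z3) * Gm)" "j < dim_col (Fm * Dg (evl r mu z1 z2 z3) * Gm)"
  hence i: "i < 8" and j: "j < 8" by auto
  show "map_mat complex_of_real (Cm r mu z1 z2 z3) $$ (i, j) = (Fm * Dg (evl r mu z1 z2 z3) * Gm) $$ (i, j)"
    unfolding FDG_entry[OF i j] dft_entry using i j by (simp add: Cm_def)
qed auto

lemma CmT_dft: "map_mat complex_of_real (transpose_mat (Cm r mu z1 z2 z3)) = Fm * Dg (\<lambda>k. cnj (evl r mu z1 z2 z3 k)) * Gm"
proof (rule eq_matI)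
  fix i j assume "i < dim_row (Fm * Dg (\<lambda>k. cnj (evl r mu z1 z2 z3 k)) * Gm)" "j < dim_col (Fm * Dg (\<lambda>k. cnj (evl r mu z1 z2 z3 k)) * Gm)"
  hence i: "i < 8" and j: "j < 8" by auto
  have "(\<Sum>k<8. cnj (evl r mu z1 z2 z3 k) * ee k (int i - int j)) = cnj (\<Sum>k<8. evl r mu z1 z2 z3 k * ee k (int j - int i))"
    by (simp add: ee_neg[symmetric])
  also have "\<dots> = of_real (8 * cre r mu z1 z2 z3 (int j - int i))" unfolding dft_entry by simp
  finally have eq: "(\<Sum>k<8. cnj (evl r mu z1 z2 z3 k) * ee k (int i - int j)) = of_real (8 * cre r mu z1 z2 z3 (int j - int i))" .
  show "map_mat complex_of_real (transpose_mat (Cm r mu z1 z2 z3)) $$ (i, j) = (Fm * Dg (\<lambda>k. cnj (evl r mu z1 z2 z3 k)) * Gm) $$ (i, j)"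
    unfolding FDG_entry[OF i j] eq using i j by (simp add: Cm_def)
qed auto

lemma map_real_inj: "map_mat complex_of_real X = map_mat complex_of_real Y \<Longrightarrow> X = Y"
  by (metis (no_types, lifting) index_map_mat(1,2,3) mat_eq_iff of_real_eq_iff)

lemma Dg_mult: "Dg d * Dg e = Dg (\<lambda>i. d i * e i)"
proof (rule eq_matI)
  fix i j assume "i < dim_row (Dg (\<lambda>i. d i * e i))" "j < dim_col (Dg (\<lambda>i. d i * e i))"
  hence i: "i < 8" and j: "j < 8" by auto
  have "(Dg d * Dg e) $$ (i,j) = (\<Sum>k\<in>{0..<8}. Dg d $$ (i,k) * Dg e $$ (k,j))"
    using i j by (simp add: scalar_prod_def)
  also have "\<dots> = (\<Sum>k\<in>{0..<8}. if k = i then (if i = j then d i * e i else 0) else 0)"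
    by (rule sum.cong[OF refl], insert i j, auto simp: Dg_def)
  finally show "(Dg d * Dg e) $$ (i,j) = Dg (\<lambda>i. d i * e i) $$ (i,j)" using i j by (simp add: Dg_def)
qed auto

lemma Dg_comm: "Dg d * Dg e = Dg e * Dg d"
  unfolding Dg_mult by (simp add: mult.commute)

lemma FDGFDG: "(Fm * Dg d * Gm) * (Fm * Dg e * Gm) = Fm * (Dg d * Dg e) * Gm"
proof -
  have c: "Fm \<in> carrier_mat 8 8" "Gm \<in> carrier_mat 8 8" "Dg d \<in> carrier_mat 8 8" "Dg e \<in> carrier_mat 8 8" by auto
  define X where "X = Fm * Dg d"
  have X: "X \<in> carrier_mat 8 8" unfolding X_def by auto
  have Y: "Fm * Dg e * Gm \<in> carrier_mat 8 8" by auto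
  have "(Fm * Dg d * Gm) * (Fm * Dg e * Gm) = X * (Gm * (Fm * Dg e * Gm))"
    unfolding X_def[symmetric] by (rule assoc_mult_mat[OF X c(2) Y])
  also have "Gm * (Fm * Dg e * Gm) = (Gm * (Fm * Dg e)) * Gm"
    by (rule assoc_mult_mat[symmetric], auto)
  also have "Gm * (Fm * Dg e) = (Gm * Fm) * Dg e"
    by (rule assoc_mult_mat[symmetric], auto)
  also have "\<dots> = Dg e" unfolding GF by simp
  also have "X * (Dg e * Gm) = (X * Dg e) * Gm"
    by (rule assoc_mult_mat[symmetric, OF X], auto)
  also have "X * Dg e = Fm * (Dg d * Dg e)" unfolding X_def
    by (rule assoc_mult_mat, auto)
  finally show ?thesis .
qed


lemma Cm_normal: "Cm r mu z1 z2 z3 * transpose_mat (Cm r mu z1 z2 z3) = transpose_mat (Cm r mu z1 z2 z3) * Cm r mu z1 z2 z3"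
proof (rule map_real_inj)
  let ?C = "Cm r mu z1 z2 z3"
  have "map_mat complex_of_real (?C * transpose_mat ?C) = map_mat complex_of_real ?C * map_mat complex_of_real (transpose_mat ?C)"
    by (rule of_real_hom.mat_hom_mult, auto)
  also have "\<dots> = Fm * (Dg (evl r mu z1 z2 z3) * Dg (\<lambda>k. cnj (evl r mu z1 z2 z3 k))) * Gm"
    unfolding Cm_dft CmT_dft FDGFDG ..
  also have "\<dots> = Fm * (Dg (\<lambda>k. cnj (evl r mu z1 z2 z3 k)) * Dg (evl r mu z1 z2 z3)) * Gm"
    by (simp add: Dg_comm)
  also have "\<dots> = map_mat complex_of_real (transpose_mat ?C) * map_mat complex_of_real ?C"
    unfolding Cm_dft CmT_dft FDGFDG ..
  also have "\<dots> = map_mat complex_of_real (transpose_mat ?C * ?C)"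
    by (rule of_real_hom.mat_hom_mult[symmetric], auto)
  finally show "map_mat complex_of_real (?C * transpose_mat ?C) = map_mat complex_of_real (transpose_mat ?C * ?C)" .
qed

lemma Cm_cpc: "cpc (Cm r mu z1 z2 z3) = (\<Prod>k\<leftarrow>[0..<8]. [:- evl r mu z1 z2 z3 k, 1:])"
proof -
  have sim: "similar_mat (map_mat complex_of_real (Cm r mu z1 z2 z3)) (Dg (evl r mu z1 z2 z3))"
    by (rule similar_matI[where n=8 and P=Fm and Q=Gm], auto simp: FG GF Cm_dft)
  have ut: "upper_triangular (Dg (evl r mu z1 z2 z3))" by (auto simp: upper_triangular_def Dg_def)
  have d: "diag_mat (Dg (evl r mu z1 z2 z3)) = map (evl r mu z1 z2 z3) [0..<8]"
    by (auto simp: diag_mat_def Dg_def)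
  show ?thesis unfolding cpc_def char_poly_similar[OF sim] char_poly_upper_triangular[OF FGD_carrier(3) ut] d
    by (simp add: comp_def)
qed


definition pi8 :: "nat \<Rightarrow> nat" where "pi8 i = (if i < 4 then i else 11 - i)"

lemma pi8_bij: "bij_betw pi8 {..<8} {..<8}"
proof (rule bij_betw_imageI)
  show "inj_on pi8 {..<8}" unfolding inj_on_def pi8_def by auto
  show "pi8 ` {..<8} = {..<8}"
  proof
    show "pi8 ` {..<8} \<subseteq> {..<8}" unfolding pi8_def by auto
    show "{..<8} \<subseteq> pi8 ` {..<8}"
    proof
      fix k :: nat assume k: "k \<in> {..<8}"
      have "pi8 (pi8 k) = k" "pi8 k < 8" using k unfolding pi8_def by auto
      thus "k \<in> pi8 ` {..<8}" by (metis image_eqI lessThan_iff)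
    qed
  qed
qed

interpretation p8: perm_n 8 pi8 by (unfold_locales, rule pi8_bij)

definition Cp :: "real \<Rightarrow> real \<Rightarrow> complex \<Rightarrow> complex \<Rightarrow> complex \<Rightarrow> real mat" where
  "Cp r mu z1 z2 z3 = permute_mat pi8 (Cm r mu z1 z2 z3)"

lemma pi8_lt: "i < 8 \<Longrightarrow> pi8 i < 8" unfolding pi8_def by auto

lemma pi8_rev_mod: "p < 8 \<Longrightarrow> q < 8 \<Longrightarrow>
  (int (pi8 (8 - 1 - p)) - int (pi8 (8 - 1 - q))) mod 8 = (int (pi8 p) - int (pi8 q)) mod 8"
  unfolding pi8_def by (cases "p < 4"; cases "q < 4"; simp; presburger)

lemma Cp_RP: assumes r: "r \<ge> \<bar>mu\<bar> + 2 * (cmod z1 + cmod z2 + cmod z3)"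
  shows "RP (Cp r mu z1 z2 z3) (2*4) r (one_v 8)"
proof -
  let ?C = "Cm r mu z1 z2 z3"
  have C: "?C \<in> carrier_mat 8 8" by simp
  have o: "one_v 8 \<in> carrier_vec 8" by (simp add: one_v_def)
  have po: "permute_vec pi8 (one_v 8) = one_v 8" by (auto simp: one_v_def permute_vec_def pi8_lt intro!: eq_vecI)
  have rs: "?C *\<^sub>v one_v 8 = r \<cdot>\<^sub>v one_v 8"
  proof (rule eq_vecI)
    fix i assume "i < dim_vec (r \<cdot>\<^sub>v one_v 8)"
    hence i: "i < 8" by (simp add: one_v_def)
    have "(?C *\<^sub>v one_v 8) $ i = (\<Sum>j<8. cre r mu z1 z2 z3 (int i - int j))"
      using i by (simp add: scalar_prod_def one_v_def Cm_def sum8_lt)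
    thus "(?C *\<^sub>v one_v 8) $ i = (r \<cdot>\<^sub>v one_v 8) $ i" using i by (simp add: cre_rowsum one_v_def)
  qed (simp add: one_v_def)
  have cs: "transpose_mat ?C *\<^sub>v one_v 8 = r \<cdot>\<^sub>v one_v 8"
  proof (rule eq_vecI)
    fix i assume "i < dim_vec (r \<cdot>\<^sub>v one_v 8)"
    hence i: "i < 8" by (simp add: one_v_def)
    have "(transpose_mat ?C *\<^sub>v one_v 8) $ i = (\<Sum>j<8. cre r mu z1 z2 z3 (int j - int i))"
      using i by (simp add: scalar_prod_def one_v_def Cm_def sum8_lt)
    thus "(transpose_mat ?C *\<^sub>v one_v 8) $ i = (r \<cdot>\<^sub>v one_v 8) $ i" using i by (simp add: cre_colsum one_v_def)
  qed (simp add: one_v_def)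
  show ?thesis unfolding RP_def Cp_def
  proof (intro conjI allI impI)
    show "permute_mat pi8 ?C \<in> carrier_mat (2 * 4) (2 * 4)" using permute_mat_carrier[of pi8 ?C] by simp
    show "one_v 8 \<in> carrier_vec (2 * 4)" by (simp add: one_v_def)
    show "\<exists>i<2 * 4. 0 < one_v 8 $ i" by (rule exI[of _ 0], simp add: one_v_def)
    fix i :: nat assume i: "i < 2 * 4"
    show "0 \<le> one_v 8 $ i" using i by (simp add: one_v_def)
    show "one_v 8 $ (2 * 4 - 1 - i) = one_v 8 $ i" using i by (simp add: one_v_def)
    fix j :: nat assume j: "j < 2 * 4"
    show "0 \<le> permute_mat pi8 ?C $$ (i, j)" using i j pi8_lt[of i] pi8_lt[of j]
      by (simp add: Cm_def cre_nonneg[OF r])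
    have i8: "i < 8" and j8: "j < 8" using i j by auto
    have "permute_mat pi8 ?C $$ (2 * 4 - 1 - i, 2 * 4 - 1 - j) = cre r mu z1 z2 z3 (int (pi8 (8 - 1 - i)) - int (pi8 (8 - 1 - j)))"
      using i8 j8 pi8_lt[of "8 - 1 - i"] pi8_lt[of "8 - 1 - j"] by (simp add: Cm_def)
    also have "\<dots> = cre r mu z1 z2 z3 (int (pi8 i) - int (pi8 j))" by (rule cre_cong[OF pi8_rev_mod[OF i8 j8]])
    also have "\<dots> = permute_mat pi8 ?C $$ (i, j)" using i8 j8 pi8_lt[of i] pi8_lt[of j] by (simp add: Cm_def)
    finally show "permute_mat pi8 ?C $$ (2 * 4 - 1 - i, 2 * 4 - 1 - j) = permute_mat pi8 ?C $$ (i, j)" .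
  next
    show "permute_mat pi8 ?C *\<^sub>v one_v 8 = r \<cdot>\<^sub>v one_v 8"
      using p8.permute_mult_vec[OF C o] unfolding po rs
      by (auto simp: permute_vec_def one_v_def pi8_lt intro!: eq_vecI)
    show "transpose_mat (permute_mat pi8 ?C) *\<^sub>v one_v 8 = r \<cdot>\<^sub>v one_v 8"
      using p8.permute_mult_vec[of "transpose_mat ?C" "one_v 8"] o unfolding p8.permute_transpose[OF C] po cs
      by (auto simp: permute_vec_def one_v_def pi8_lt intro!: eq_vecI)
    show "permute_mat pi8 ?C * transpose_mat (permute_mat pi8 ?C) = transpose_mat (permute_mat pi8 ?C) * permute_mat pi8 ?C"
      unfolding p8.permute_transpose[OF C]
      by (subst (1 2) p8.permute_mult, auto simp: Cm_normal)
  qed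
qed

lemma Cp_cpc: "cpc (Cp r mu z1 z2 z3) = (\<Prod>k\<leftarrow>[0..<8]. [:- evl r mu z1 z2 z3 k, 1:])"
proof -
  have "map_mat complex_of_real (Cp r mu z1 z2 z3) = permute_mat pi8 (map_mat complex_of_real (Cm r mu z1 z2 z3))"
    unfolding Cp_def by (auto intro!: eq_matI simp: pi8_lt)
  moreover have "similar_mat (map_mat complex_of_real (Cm r mu z1 z2 z3)) (permute_mat pi8 (map_mat complex_of_real (Cm r mu z1 z2 z3)))"
    by (rule p8.permute_similar, auto)
  ultimately show ?thesis unfolding Cm_cpc[symmetric] cpc_def using char_poly_similar by metis
qed




lemma RP_final: assumes R: "RP Q N al v"
  shows "Q \<in> carrier_mat N N \<and> normal_mat Q \<and> centrosymmetric Q \<and> nonneg_mat Q"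
proof -
  note r = R[unfolded RP_def]
  have Q: "Q \<in> carrier_mat N N" using r by auto
  show ?thesis using r Q unfolding normal_real[OF Q] centro_iff[OF Q] nonneg_mat_def by auto
qed

lemma prod_upt: "(\<Prod>a\<leftarrow>map f [m..<n]. g a) = (\<Prod>j\<in>{m..<n}. g (f j))"
  using prod.distinct_set_conv_list[of "[m..<n]" "\<lambda>j. g (f j)"] by (simp add: comp_def)

theorem theorem3p13:
  fixes n :: nat and lam :: "nat \<Rightarrow> real" and z1 z2 z3 :: complex
  assumes "n \<ge> 1"
    and "lam 0 \<ge> 0" and "0 > lam 1"
    and "\<And>j. 1 \<le> j \<Longrightarrow> j < n \<Longrightarrow> lam j \<ge> lam (Suc j)"
    and "Im z1 > 0" and "Im z2 > 0" and "Im z3 > 0"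
    and "lam 0 + (\<Sum>j=1..n. lam j) - 2 * (cmod z1 + cmod z2 + cmod z3) \<ge> 0"
  shows "\<exists>Q :: real mat. Q \<in> carrier_mat (n + 7) (n + 7) \<and> normal_mat Q \<and>
           centrosymmetric Q \<and> nonneg_mat Q \<and>
           has_eigenvalues Q (map (\<lambda>j. complex_of_real (lam j)) [0..<n+1]
                               @ [z1, z2, z3, cnj z1, cnj z2, cnj z3])"
proof -
  note n = assms(1) and l0 = assms(2) and l1 = assms(3) and dec = assms(4) and cond = assms(8)
  have neg: "lam j < 0" if "1 \<le> j" "j \<le> n" for j
    using that
  proof (induction j)
    case (Suc j)
    show ?case
    proof (cases "j = 0")
      case False
      hence "lam (Suc j) \<le> lam j" using dec[of j] Suc by auto
      thus ?thesis using Suc False by auto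
    qed (insert l1, auto)
  qed simp
  define S where "S = cmod z1 + cmod z2 + cmod z3"
  define P where "P = (\<lambda>a::complex. [:- a, 1:])"
  have Pa: "\<And>a. [:- a, 1:] = P a" unfolding P_def by simp
  define Z where "Z = P z1 * P z2 * P z3 * P (cnj z1) * P (cnj z2) * P (cnj z3)"
  have target: "(\<Prod>a\<leftarrow>map (\<lambda>j. complex_of_real (lam j)) [0..<n+1] @ [z1, z2, z3, cnj z1, cnj z2, cnj z3]. [:- a, 1:])
    = (\<Prod>j\<in>{0..<n+1}. P (of_real (lam j))) * Z"
  proof -
    have "(\<Prod>a\<leftarrow>map (\<lambda>j. complex_of_real (lam j)) [0..<n+1] @ [z1, z2, z3, cnj z1, cnj z2, cnj z3]. [:- a, 1:])
      = (\<Prod>a\<leftarrow>map (\<lambda>j. complex_of_real (lam j)) [0..<n+1] @ [z1, z2, z3, cnj z1, cnj z2, cnj z3]. P a)"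
      unfolding P_def ..
    also have "\<dots> = (\<Prod>j\<in>{0..<n+1}. P (of_real (lam j))) * Z"
      unfolding map_append prod_list.append prod_upt Z_def
      by (simp only: list.map prod_list.Cons prod_list.Nil mult_1_right mult.assoc)
    finally show ?thesis .
  qed
  have evlP: "(\<Prod>k\<leftarrow>[0..<8]. [:- evl r mu z1 z2 z3 k, 1:]) = P (of_real r) * P (of_real mu) * Z" for r mu
  proof -
    have u8: "[0..<8] = [0,1,2,3,4,5,6,7::nat]" by (simp add: upt_rec)
    have e: "evl r mu z1 z2 z3 0 = of_real r" "evl r mu z1 z2 z3 1 = z1" "evl r mu z1 z2 z3 2 = z2"
      "evl r mu z1 z2 z3 3 = z3" "evl r mu z1 z2 z3 4 = of_real mu" "evl r mu z1 z2 z3 5 = cnj z3"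
      "evl r mu z1 z2 z3 6 = cnj z2" "evl r mu z1 z2 z3 7 = cnj z1" by (simp_all add: evl_def)
    have "(\<Prod>k\<leftarrow>[0..<8]. [:- evl r mu z1 z2 z3 k, 1:]) = (\<Prod>k\<leftarrow>[0..<8]. P (evl r mu z1 z2 z3 k))"
      unfolding P_def ..
    also have "\<dots> = P (of_real r) * P (of_real mu) * Z" unfolding u8 Z_def
      by (simp only: list.map prod_list.Cons prod_list.Nil mult_1_right mult_1_left e mult.assoc mult.commute mult.left_commute)
    finally show ?thesis .
  qed
  show ?thesis
  proof (cases "n = 1")
    case True
    have r: "lam 0 \<ge> \<bar>lam 1\<bar> + 2 * S" using cond l1 True unfolding S_def by auto
    have R: "RP (Cp (lam 0) (lam 1) z1 z2 z3) (n + 7) (lam 0) (one_v 8)"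
      using Cp_RP[OF r[unfolded S_def]] True by simp
    have "cpc (Cp (lam 0) (lam 1) z1 z2 z3) = (\<Prod>j\<in>{0..<n+1}. P (of_real (lam j))) * Z"
      unfolding Cp_cpc evlP using True by (simp add: P_def eval_nat_numeral ac_simps)
    thus ?thesis using RP_final[OF R] unfolding has_eigenvalues_def target cpc_def[symmetric] by blast
  next
    case False
    hence n2: "n \<ge> 2" using n by auto
    define r where "r = 2 * S - lam 1"
    have rr: "r \<ge> \<bar>lam 1\<bar> + 2 * S" unfolding r_def using l1 by auto
    note RB = Cp_RP[OF rr[unfolded S_def], folded S_def]
    define ls where "ls = map lam [3..<n+1]"
    define al where "al = lam 0 + lam 1 + lam 2 - 2 * S"
    have sumsplit: "(\<Sum>j=1..n. lam j) = lam 1 + lam 2 + sum_list ls"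
    proof -
      have "(\<Sum>j=1..n. lam j) = (\<Sum>j\<in>{1..<n+1}. lam j)" by (rule sum.cong, auto)
      also have "\<dots> = lam 1 + (\<Sum>j\<in>{2..<n+1}. lam j)"
        using n2 sum.atLeast_Suc_lessThan[where m=1 and n="n+1" and g=lam] by (simp add: numeral_2_eq_2)
      also have "(\<Sum>j\<in>{2..<n+1}. lam j) = lam 2 + (\<Sum>j\<in>{3..<n+1}. lam j)"
        using n2 sum.atLeast_Suc_lessThan[where m=2 and n="n+1" and g=lam] by (simp add: numeral_3_eq_3)
      also have "(\<Sum>j\<in>{3..<n+1}. lam j) = sum_list ls" unfolding ls_def
        using sum_set_upt_conv_sum_list_nat[of lam 3 "n+1"] by (simp only: set_upt)
      finally show ?thesis by simp
    qed
    have lsneg: "\<forall>l\<in>set ls. l < 0" unfolding ls_def using neg by auto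
    have sl: "sum_list ls \<le> 0" using lsneg by (induct ls, auto)
    have al1: "al + sum_list ls \<ge> 0" using cond sumsplit unfolding al_def S_def by auto
    have al0: "al \<ge> 0" using al1 sl by auto
    obtain A u where RA: "RP A (length ls + 1) al u"
      and cA: "cpc A = [:- complex_of_real al, 1:] * (\<Prod>l\<leftarrow>ls. [:- complex_of_real l, 1:])"
      using sul[OF lsneg al0 al1] by auto
    have lenls: "length ls + 1 = n - 1" unfolding ls_def using n2 by (simp only: length_map length_upt)
    have l2: "lam 2 < 0" using neg[of 2] n2 by auto
    have S0: "S \<ge> 0" unfolding S_def by auto
    have t1: "lam 0 - al > 0" unfolding al_def using l1 l2 S0 by auto
    have t2: "lam 0 - r \<ge> 0" unfolding r_def using cond sumsplit sl l2 unfolding S_def by auto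
    have uu: "u \<bullet> u > 0" using pos_self_scalar[of u "length ls + 1"] RA unfolding RP_def by auto
    have ww: "one_v 8 \<bullet> one_v 8 > 0" by (simp add: one_v_def scalar_prod_def)
    define rho where "rho = sqrt ((lam 0 - al) * (lam 0 - r) / ((u \<bullet> u) * (one_v 8 \<bullet> one_v 8)))"
    have rho: "rho \<ge> 0" unfolding rho_def using t1 t2 uu ww by auto
    have K: "(lam 0 - al) * (lam 0 - r) = rho^2 * (u \<bullet> u) * (one_v 8 \<bullet> one_v 8)"
      unfolding rho_def using t1 t2 uu ww by (simp add: real_sqrt_pow2 divide_nonneg_pos)
    have t1': "lam 0 > al" using t1 by simp
    note E = embed_lemma[OF RB RA rho t1' K]
    define Q where "Q = emb (Cp r (lam 1) z1 z2 z3) A rho (one_v 8) u"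
    have N: "2 * 4 + (length ls + 1) = n + 7" using lenls n2 by simp
    have R: "RP Q (n + 7) (lam 0) (newv (Cp r (lam 1) z1 z2 z3) A rho (one_v 8) u (lam 0) al)"
      using E(1) unfolding Q_def N .
    have e2: "al + r - lam 0 = lam 2" unfolding al_def r_def by simp
    have prodls: "(\<Prod>l\<leftarrow>ls. [:- complex_of_real l, 1:]) = (\<Prod>j\<in>{3..<n+1}. P (of_real (lam j)))"
      unfolding ls_def P_def by (rule prod_upt)
    have split: "(\<Prod>j\<in>{0..<n+1}. P (of_real (lam j))) = P (of_real (lam 0)) * P (of_real (lam 1)) * P (of_real (lam 2))
      * (\<Prod>j\<in>{3..<n+1}. P (of_real (lam j)))"
    proof -
      let ?f = "\<lambda>j. P (of_real (lam j))"
      have "prod ?f {0..<n+1} = ?f 0 * prod ?f {1..<n+1}"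
        using prod.atLeast_Suc_lessThan[where m=0 and n="n+1" and g="?f"] by simp
      also have "prod ?f {1..<n+1} = ?f 1 * prod ?f {2..<n+1}"
        using n2 prod.atLeast_Suc_lessThan[where m=1 and n="n+1" and g="?f"] by (simp add: numeral_2_eq_2)
      also have "prod ?f {2..<n+1} = ?f 2 * prod ?f {3..<n+1}"
        using n2 prod.atLeast_Suc_lessThan[where m=2 and n="n+1" and g="?f"] by (simp add: numeral_3_eq_3)
      finally show ?thesis by (simp only: mult.assoc)
    qed
    have "P (of_real al) * P (of_real r) * cpc Q = P (of_real al) * P (of_real r) * ((\<Prod>j\<in>{0..<n+1}. P (of_real (lam j))) * Z)"
      using E(2) unfolding Q_def[symmetric] e2 Cp_cpc evlP cA prodls split unfolding Pa
      by (simp only: mult.assoc mult.commute mult.left_commute)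
    hence "cpc Q = (\<Prod>j\<in>{0..<n+1}. P (of_real (lam j))) * Z"
      by (subst (asm) mult_left_cancel, auto simp: P_def)
    thus ?thesis using RP_final[OF R] unfolding has_eigenvalues_def target cpc_def[symmetric] by blast
  qed
qed


end
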